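(* Let $\mathcal{A}=(A,B,C,S_B,S_C,\Delta_B,\Delta_C)$ be a regular multiplier Hopf algebroid with antipode $S$ and canonical maps $T_\lambda,T_\rho,{}_\lambda T,{}_\rho T$, and let $\Sigma$ denote the flip $a\otimes b\mapsto b\otimes a$ between the relevant balanced tensor products. Then: (i) the three maps $(S\otimes\iota)\circ\Sigma\circ{}_\lambda T$, $\Sigma\circ T_\rho^{-1}\circ T_\lambda\circ\Sigma$ and ${}_\rho T^{-1}\circ(S\otimes\iota)\circ\Sigma$ from $A_C\otimes{}_CA$ to ${}_BA\otimes A_B$ coincide; (ii) the three maps $(\iota\otimes S)\circ\Sigma\circ T_\rho$, $\Sigma\circ{}_\lambda T^{-1}\circ{}_\rho T\circ\Sigma$ and $T_\lambda^{-1}\circ(\iota\otimes S)\circ\Sigma$ from $A_B\otimes{}_BA$ to ${}_CA\otimes A_C$ coincide.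
   Context: All algebras are associative complex algebras, not necessarily unital; $M(A)$ is the two-sided multiplier algebra of a non-degenerate idempotent algebra $A$. Multiplier bialgebroid: a tuple $(A,B,C,S_B,S_C,\Delta_B,\Delta_C)$ with $A$ non-degenerate and idempotent, subalgebras $B,C\subseteq M(A)$, anti-isomorphisms $S_B\colon B\to C$, $S_C\colon C\to B$. Quotients of $A\otimes A$: ${}_BA\otimes A^B$ by the span of $xa\otimes b-a\otimes S_B(x)b$; ${}^CA\otimes A_C$ by $aS_C(y)\otimes b-a\otimes by$; $A_B\otimes{}_BA$ by $ax\otimes b-a\otimes xb$; $A_C\otimes{}_CA$ by $ay\otimes b-a\otimes yb$; ${}_CA\otimes A_C$ by $ya\otimes b-a\otimes by$; ${}_BA\otimes A_B$ by $xa\otimes b-a\otimes bx$ ($x\in B,y\in C$). Requirements: $BA=A=S_B(B)A$, $AC=A=AS_C(C)$; ${}_BA\otimes A^B$ non-degenerate as a right module over $A\otimes1$ and $1\otimes A$, ${}^CA\otimes A_C$ non-degenerate as a left module over $A\otimes1$ and $1\otimes A$; $\Delta_B$ a homomorphism into the algebra of endomorphisms $T$ of ${}_BA\otimes A^B$ for which $T(a\otimes1),T(1\otimes b)\in{}_BA\otimes A^B$ exist with $T(a\otimes b)=T(a\otimes1)(1\otimes b)=T(1\otimes b)(a\otimes1)$; $\Delta_C$ a homomorphism into the algebra of right-acting maps $w\mapsto wT$ on ${}^CA\otimes A_C$ for which $(a\otimes1)T,(1\otimes b)T$ exist with $(a\otimes b)T=(1\otimes b)((a\otimes1)T)=(a\otimes1)((1\otimes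 b)T)$; $\Delta_B(xyax'y')=(y\otimes x)\Delta_B(a)(y'\otimes x')$, $\Delta_C(xyax'y')=(y\otimes x)\Delta_C(a)(y'\otimes x')$; coassociativities $(\Delta_B\otimes\iota)(\Delta_B(b)(1\otimes c))(a\otimes1\otimes1)=(\iota\otimes\Delta_B)(\Delta_B(b)(a\otimes1))(1\otimes1\otimes c)$, $(a\otimes1\otimes1)((\Delta_C\otimes\iota)((1\otimes c)\Delta_C(b)))=(1\otimes1\otimes c)((\iota\otimes\Delta_C)((a\otimes1)\Delta_C(b)))$, and mixed $((\Delta_B\otimes\iota)((1\otimes c)\Delta_C(b)))(a\otimes1\otimes1)=(1\otimes1\otimes c)((\iota\otimes\Delta_C)(\Delta_B(b)(a\otimes1)))$, $(a\otimes1\otimes1)((\Delta_C\otimes\iota)(\Delta_B(b)(1\otimes c)))=((\iota\otimes\Delta_B)((a\otimes1)\Delta_C(b)))(1\otimes1\otimes c)$. Canonical maps: $T_\lambda\colon{}_CA\otimes A_C\to{}_BA\otimes A^B$, $a\otimes b\mapsto\Delta_B(b)(a\otimes1)$; $T_\rho\colon A_B\otimes{}_BA\to{}_BA\otimes A^B$, $a\otimes b\mapsto\Delta_B(a)(1\otimes b)$; ${}_\lambda T\colon A_C\otimes{}_CA\to{}^CA\otimes A_C$, $a\otimes b\mapsto(a\otimes1)\Delta_C(b)$; ${}_\rho T\colon{}_BA\otimes A_B\to{}^CA\otimes A_C$, $a\otimes b\mapsto(1\otimes b)\Delta_C(a)$. Counits: left counit $\varepsilon_B\colon A\to B$ with $\varepsilon_B(xS_B(x')a)=x\varepsilon_B(a)x'$,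 $\sum S_B(\varepsilon_B(c_i))d_i=ab$ when $T_\rho(a\otimes b)=\sum c_i\otimes d_i$, and $\sum\varepsilon_B(d_i)c_i=ba$ when $T_\lambda(a\otimes b)=\sum c_i\otimes d_i$. Right counit $\varepsilon_C\colon A\to C$ with $\varepsilon_C(aS_C(y')y)=y'\varepsilon_C(a)y$, $\sum d_i\varepsilon_C(c_i)=ba$ when ${}_\rho T(a\otimes b)=\sum c_i\otimes d_i$, and $\sum c_iS_C(\varepsilon_C(d_i))=ab$ when ${}_\lambda T(a\otimes b)=\sum c_i\otimes d_i$. Regular multiplier Hopf algebroid: multiplier bialgebroid with all four canonical maps bijective and $S_B(I_B)A=I^BA=A=AS_C(I_C)=A\,{}^CI$, where $I_B,I^B\subseteq B$ are spanned by values of maps $\omega\colon A\to B$ with $\omega(xa)=x\omega(a)$, resp. $\omega(S_B(x)a)=\omega(a)x$, and $I_C,{}^CI\subseteq C$ by values of $\omega\colon A\to C$ with $\omega(ay)=\omega(a)y$, resp. $\omega(aS_C(y))=y\omega(a)$. Its antipode is the (unique) algebra anti-automorphism $S$ of $A$ with $S(xyax'y')=S_C(y')S_B(x')S(a)S_C(y)S_B(x)$ such that for some left counit $\varepsilon_B$ and right counit $\varepsilon_C$: $m(S\otimes\iota)T_\rho(a\otimes b)=S_C(\varepsilon_C(a))b$ and $m(\iota\otimes S)\,{}_\lambda T(a\otimes b)=aS_B(\varepsilon_B(b))$. *)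

theory Defs
  imports Main "HOL.Complex"
begin

section \<open>Complex associative (not necessarily unital) algebras\<close>

class calg = ring +
  fixes cscale :: "complex \<Rightarrow> 'a \<Rightarrow> 'a"
  assumes cscale_add_right: "cscale c (a + b) = cscale c a + cscale c b"
    and cscale_add_left: "cscale (c + d) a = cscale c a + cscale d a"
    and cscale_assoc: "cscale c (cscale d a) = cscale (c * d) a"
    and cscale_one: "cscale 1 a = a"
    and cscale_mult_left: "cscale c (a * b) = cscale c a * b"
    and cscale_mult_right: "cscale c (a * b) = a * cscale c b"

definition clinear :: "('a::calg \<Rightarrow> 'b::calg) \<Rightarrow> bool" where
  "clinear f \<longleftrightarrow> (\<forall>a b. f (a + b) = f a + f b) \<and> (\<forall>c a. f (cscale c a) = cscale c (f a))"

definition nondegenerate_alg :: "'a::calg itself \<Rightarrow> bool" where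
  "nondegenerate_alg _ \<longleftrightarrow>
     (\<forall>a::'a. (\<forall>b. a * b = 0) \<longrightarrow> a = 0) \<and> (\<forall>a::'a. (\<forall>b. b * a = 0) \<longrightarrow> a = 0)"

text \<open>Idempotent: A equals the linear span of all products (scalars absorbed into factors).\<close>
definition idempotent_alg :: "'a::calg itself \<Rightarrow> bool" where
  "idempotent_alg _ \<longleftrightarrow> (\<forall>a::'a. \<exists>l. a = sum_list (map (\<lambda>(b, c). b * c) l))"

section \<open>Two-sided multipliers M(A)\<close>

text \<open>A multiplier is a pair (L,R) with a L(b) = R(a) b; L is the left action m a,
  R the right action a m.\<close>
type_synonym 'a mult = "('a \<Rightarrow> 'a) \<times> ('a \<Rightarrow> 'a)"

definition multipliers :: "'a::calg mult set" where
  "multipliers = {(L, R). \<forall>a b. a * L b = R a * b}"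

definition lact :: "'a mult \<Rightarrow> 'a \<Rightarrow> 'a" where "lact m a = fst m a"
definition ract :: "'a \<Rightarrow> 'a mult \<Rightarrow> 'a" where "ract a m = snd m a"

definition mmul :: "'a mult \<Rightarrow> 'a mult \<Rightarrow> 'a mult" where
  "mmul m n = (fst m \<circ> fst n, snd n \<circ> snd m)"
definition madd :: "'a::calg mult \<Rightarrow> 'a mult \<Rightarrow> 'a mult" where
  "madd m n = ((\<lambda>a. fst m a + fst n a), (\<lambda>a. snd m a + snd n a))"
definition msc :: "complex \<Rightarrow> 'a::calg mult \<Rightarrow> 'a mult" where
  "msc c m = ((\<lambda>a. cscale c (fst m a)), (\<lambda>a. cscale c (snd m a)))"
definition mzero :: "'a::calg mult" where
  "mzero = ((\<lambda>_. 0), (\<lambda>_. 0))"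

definition msubalg :: "'a::calg mult set \<Rightarrow> bool" where
  "msubalg X \<longleftrightarrow> X \<subseteq> multipliers \<and> mzero \<in> X \<and>
     (\<forall>m\<in>X. \<forall>n\<in>X. madd m n \<in> X \<and> mmul m n \<in> X) \<and> (\<forall>c. \<forall>m\<in>X. msc c m \<in> X)"

definition mlinear_on :: "'a::calg mult set \<Rightarrow> ('a mult \<Rightarrow> 'a mult) \<Rightarrow> bool" where
  "mlinear_on X f \<longleftrightarrow> (\<forall>m\<in>X. \<forall>n\<in>X. f (madd m n) = madd (f m) (f n)) \<and>
     (\<forall>c. \<forall>m\<in>X. f (msc c m) = msc c (f m))"

definition anti_iso :: "'a::calg mult set \<Rightarrow> 'a mult set \<Rightarrow> ('a mult \<Rightarrow> 'a mult) \<Rightarrow> bool" where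
  "anti_iso X Y f \<longleftrightarrow> bij_betw f X Y \<and> mlinear_on X f \<and>
     (\<forall>m\<in>X. \<forall>n\<in>X. f (mmul m n) = mmul (f n) (f m))"

definition msum :: "'a::calg mult list \<Rightarrow> 'a mult" where
  "msum l = foldr madd l mzero"

definition mspan :: "'a::calg mult set \<Rightarrow> 'a mult set" where
  "mspan V = {msum (map (\<lambda>(c, v). msc c v) l) | l. set (map snd l) \<subseteq> V}"

text \<open>X A = A and A X = A (linear spans, scalars absorbed into A).\<close>
definition lspans :: "'a::calg mult set \<Rightarrow> bool" where
  "lspans X \<longleftrightarrow> (\<forall>a. \<exists>l. set (map fst l) \<subseteq> X \<and> a = sum_list (map (\<lambda>(m, b). lact m b) l))"
definition rspans :: "'a::calg mult set \<Rightarrow> bool" where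
  "rspans X \<longleftrightarrow> (\<forall>a. \<exists>l. set (map fst l) \<subseteq> X \<and> a = sum_list (map (\<lambda>(m, b). ract b m) l))"

definition mlinear_map :: "('a::calg \<Rightarrow> 'a mult) \<Rightarrow> bool" where
  "mlinear_map w \<longleftrightarrow> (\<forall>a b. w (a + b) = madd (w a) (w b)) \<and> (\<forall>c a. w (cscale c a) = msc c (w a))"

section \<open>Tensors: formal sums of simple tensors and the balanced quotients\<close>

type_synonym 'a tens = "('a \<times> 'a) list"
type_synonym 'a tens3 = "('a \<times> 'a \<times> 'a) list"

definition bilin :: "('a::calg \<Rightarrow> 'a \<Rightarrow> complex) \<Rightarrow> bool" where
  "bilin \<phi> \<longleftrightarrow> (\<forall>a a' b. \<phi> (a + a') b = \<phi> a b + \<phi> a' b) \<and>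
     (\<forall>a b b'. \<phi> a (b + b') = \<phi> a b + \<phi> a b') \<and>
     (\<forall>c a b. \<phi> (cscale c a) b = c * \<phi> a b) \<and> (\<forall>c a b. \<phi> a (cscale c b) = c * \<phi> a b)"

definition trilin :: "('a::calg \<Rightarrow> 'a \<Rightarrow> 'a \<Rightarrow> complex) \<Rightarrow> bool" where
  "trilin \<psi> \<longleftrightarrow> (\<forall>b c. bilin (\<lambda>a a'. \<psi> a a' c) \<and> bilin (\<lambda>a a'. \<psi> a b a'))"

definition tev :: "('a \<Rightarrow> 'a \<Rightarrow> complex) \<Rightarrow> 'a tens \<Rightarrow> complex" where
  "tev \<phi> xs = sum_list (map (\<lambda>(a, b). \<phi> a b) xs)"
definition tev3 :: "('a \<Rightarrow> 'a \<Rightarrow> 'a \<Rightarrow> complex) \<Rightarrow> 'a tens3 \<Rightarrow> complex" where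
  "tev3 \<psi> xs = sum_list (map (\<lambda>(a, b, c). \<psi> a b c) xs)"

text \<open>Two formal sums are equal in the quotient of the algebraic tensor product
  A \<otimes>_\<complex> A (resp. A \<otimes> A \<otimes> A) by the subspace generated by the balancing relations
  iff every (multi)linear functional annihilating those relations takes the same value
  on them (functionals on a quotient space separate its points).  P describes
  the functionals annihilating the balancing relations.\<close>
definition teq :: "(('a::calg \<Rightarrow> 'a \<Rightarrow> complex) \<Rightarrow> bool) \<Rightarrow> 'a tens \<Rightarrow> 'a tens \<Rightarrow> bool" where
  "teq P xs ys \<longleftrightarrow> (\<forall>\<phi>. bilin \<phi> \<and> P \<phi> \<longrightarrow> tev \<phi> xs = tev \<phi> ys)"
definition teq3 :: "(('a::calg \<Rightarrow> 'a \<Rightarrow> 'a \<Rightarrow> complex) \<Rightarrow> bool) \<Rightarrow> 'a tens3 \<Rightarrow> 'a tens3 \<Rightarrow> bool" where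
  "teq3 P xs ys \<longleftrightarrow> (\<forall>\<psi>. trilin \<psi> \<and> P \<psi> \<longrightarrow> tev3 \<psi> xs = tev3 \<psi> ys)"

definition tscale :: "complex \<Rightarrow> 'a::calg tens \<Rightarrow> 'a tens" where
  "tscale c xs = map (\<lambda>(a, b). (cscale c a, b)) xs"

text \<open>Module actions: (m\<otimes>n) w, w (m\<otimes>n) for multipliers, and w(c\<otimes>1), w(1\<otimes>c), (c\<otimes>1)w, (1\<otimes>c)w.\<close>
definition tlm :: "'a mult \<times> 'a mult \<Rightarrow> 'a tens \<Rightarrow> 'a tens" where
  "tlm mn xs = map (\<lambda>(a, b). (lact (fst mn) a, lact (snd mn) b)) xs"
definition trm :: "'a tens \<Rightarrow> 'a mult \<times> 'a mult \<Rightarrow> 'a tens" where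
  "trm xs mn = map (\<lambda>(a, b). (ract a (fst mn), ract b (snd mn))) xs"
definition ta1 :: "'a::calg tens \<Rightarrow> 'a \<Rightarrow> 'a tens" where
  "ta1 xs c = map (\<lambda>(a, b). (a * c, b)) xs"
definition ta2 :: "'a::calg tens \<Rightarrow> 'a \<Rightarrow> 'a tens" where
  "ta2 xs c = map (\<lambda>(a, b). (a, b * c)) xs"
definition la1 :: "'a::calg \<Rightarrow> 'a tens \<Rightarrow> 'a tens" where
  "la1 c xs = map (\<lambda>(a, b). (c * a, b)) xs"
definition la2 :: "'a::calg \<Rightarrow> 'a tens \<Rightarrow> 'a tens" where
  "la2 c xs = map (\<lambda>(a, b). (a, c * b)) xs"

definition tflip :: "'a tens \<Rightarrow> 'a tens" where
  "tflip xs = map (\<lambda>(a, b). (b, a)) xs"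
definition tmap1 :: "('a \<Rightarrow> 'a) \<Rightarrow> 'a tens \<Rightarrow> 'a tens" where
  "tmap1 f xs = map (\<lambda>(a, b). (f a, b)) xs"
definition tmap2 :: "('a \<Rightarrow> 'a) \<Rightarrow> 'a tens \<Rightarrow> 'a tens" where
  "tmap2 f xs = map (\<lambda>(a, b). (a, f b)) xs"

text \<open>Inverse of a bijection between quotients (E = equality of the target quotient).\<close>
definition qinv :: "('a tens \<Rightarrow> 'a tens \<Rightarrow> bool) \<Rightarrow> ('a tens \<Rightarrow> 'a tens) \<Rightarrow> 'a tens \<Rightarrow> 'a tens" where
  "qinv E f ys = (SOME xs. E (f xs) ys)"

definition qbij :: "('a tens \<Rightarrow> 'a tens \<Rightarrow> bool) \<Rightarrow> ('a tens \<Rightarrow> 'a tens \<Rightarrow> bool) \<Rightarrow> ('a tens \<Rightarrow> 'a tens) \<Rightarrow> bool" where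
  "qbij E1 E2 f \<longleftrightarrow> (\<forall>xs ys. E1 xs ys \<longrightarrow> E2 (f xs) (f ys)) \<and>
     (\<forall>xs ys. E2 (f xs) (f ys) \<longrightarrow> E1 xs ys) \<and> (\<forall>ys. \<exists>xs. E2 (f xs) ys)"

section \<open>Data of a multiplier bialgebroid\<close>

record 'a mhdata =
  Bs :: "'a mult set"
  Cs :: "'a mult set"
  SB :: "'a mult \<Rightarrow> 'a mult"
  SC :: "'a mult \<Rightarrow> 'a mult"
  DB :: "'a \<Rightarrow> 'a tens \<Rightarrow> 'a tens"   \<comment> \<open>\<Delta>_B(a) as endomorphism of _BA\<otimes>A^B (left acting)\<close>
  DC :: "'a \<Rightarrow> 'a tens \<Rightarrow> 'a tens"   \<comment> \<open>w \<mapsto> w \<Delta>_C(a) on ^CA\<otimes>A_C (right acting)\<close>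

definition eq_BAB :: "'a::calg mhdata \<Rightarrow> 'a tens \<Rightarrow> 'a tens \<Rightarrow> bool" where  \<comment> \<open>_BA \<otimes> A^B\<close>
  "eq_BAB H = teq (\<lambda>\<phi>. \<forall>x\<in>Bs H. \<forall>a b. \<phi> (lact x a) b = \<phi> a (lact (SB H x) b))"
definition eq_CAC :: "'a::calg mhdata \<Rightarrow> 'a tens \<Rightarrow> 'a tens \<Rightarrow> bool" where  \<comment> \<open>^CA \<otimes> A_C\<close>
  "eq_CAC H = teq (\<lambda>\<phi>. \<forall>y\<in>Cs H. \<forall>a b. \<phi> (ract a (SC H y)) b = \<phi> a (ract b y))"
definition eq_ABBA :: "'a::calg mhdata \<Rightarrow> 'a tens \<Rightarrow> 'a tens \<Rightarrow> bool" where
  "eq_ABBA H = teq (\<lambda>\<phi>. \<forall>x\<in>Bs H. \<forall>a b. \<phi> (ract a x) b = \<phi> a (lact x b))"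
definition eq_ACCA :: "'a::calg mhdata \<Rightarrow> 'a tens \<Rightarrow> 'a tens \<Rightarrow> bool" where
  "eq_ACCA H = teq (\<lambda>\<phi>. \<forall>y\<in>Cs H. \<forall>a b. \<phi> (ract a y) b = \<phi> a (lact y b))"
definition eq_CAAC :: "'a::calg mhdata \<Rightarrow> 'a tens \<Rightarrow> 'a tens \<Rightarrow> bool" where
  "eq_CAAC H = teq (\<lambda>\<phi>. \<forall>y\<in>Cs H. \<forall>a b. \<phi> (lact y a) b = \<phi> a (ract b y))"
definition eq_BAAB :: "'a::calg mhdata \<Rightarrow> 'a tens \<Rightarrow> 'a tens \<Rightarrow> bool" where
  "eq_BAAB H = teq (\<lambda>\<phi>. \<forall>x\<in>Bs H. \<forall>a b. \<phi> (lact x a) b = \<phi> a (ract b x))"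

definition R1 :: "'a::calg mhdata \<Rightarrow> ('a \<Rightarrow> 'a \<Rightarrow> 'a \<Rightarrow> complex) \<Rightarrow> bool" where
  "R1 H \<psi> \<longleftrightarrow> (\<forall>x\<in>Bs H. \<forall>u v w. \<psi> (lact x u) v w = \<psi> u (lact (SB H x) v) w)"
definition R2 :: "'a::calg mhdata \<Rightarrow> ('a \<Rightarrow> 'a \<Rightarrow> 'a \<Rightarrow> complex) \<Rightarrow> bool" where
  "R2 H \<psi> \<longleftrightarrow> (\<forall>x\<in>Bs H. \<forall>u v w. \<psi> u (lact x v) w = \<psi> u v (lact (SB H x) w))"
definition R1' :: "'a::calg mhdata \<Rightarrow> ('a \<Rightarrow> 'a \<Rightarrow> 'a \<Rightarrow> complex) \<Rightarrow> bool" where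
  "R1' H \<psi> \<longleftrightarrow> (\<forall>y\<in>Cs H. \<forall>u v w. \<psi> (ract u (SC H y)) v w = \<psi> u (ract v y) w)"
definition R2' :: "'a::calg mhdata \<Rightarrow> ('a \<Rightarrow> 'a \<Rightarrow> 'a \<Rightarrow> complex) \<Rightarrow> bool" where
  "R2' H \<psi> \<longleftrightarrow> (\<forall>y\<in>Cs H. \<forall>u v w. \<psi> u (ract v (SC H y)) w = \<psi> u v (ract w y))"

text \<open>\<Delta>_B(b)(a\<otimes>1), \<Delta>_B(a)(1\<otimes>b), (a\<otimes>1)\<Delta>_C(b), (1\<otimes>c)\<Delta>_C(b).\<close>
definition DBl :: "'a::calg mhdata \<Rightarrow> 'a \<Rightarrow> 'a \<Rightarrow> 'a tens" where
  "DBl H b a = (SOME t. \<forall>c. eq_BAB H (DB H b [(a, c)]) (ta2 t c))"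
definition DBr :: "'a::calg mhdata \<Rightarrow> 'a \<Rightarrow> 'a \<Rightarrow> 'a tens" where
  "DBr H a b = (SOME t. \<forall>c. eq_BAB H (DB H a [(c, b)]) (ta1 t c))"
definition DCl :: "'a::calg mhdata \<Rightarrow> 'a \<Rightarrow> 'a \<Rightarrow> 'a tens" where
  "DCl H b a = (SOME t. \<forall>c. eq_CAC H (DC H b [(a, c)]) (la2 c t))"
definition DCr :: "'a::calg mhdata \<Rightarrow> 'a \<Rightarrow> 'a \<Rightarrow> 'a tens" where
  "DCr H b c = (SOME t. \<forall>a. eq_CAC H (DC H b [(a, c)]) (la1 a t))"

section \<open>Canonical maps (linearly extended to formal sums)\<close>

definition T_lambda :: "'a::calg mhdata \<Rightarrow> 'a tens \<Rightarrow> 'a tens" where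
  "T_lambda H xs = concat (map (\<lambda>(a, b). DBl H b a) xs)"
definition T_rho :: "'a::calg mhdata \<Rightarrow> 'a tens \<Rightarrow> 'a tens" where
  "T_rho H xs = concat (map (\<lambda>(a, b). DBr H a b) xs)"
definition lambda_T :: "'a::calg mhdata \<Rightarrow> 'a tens \<Rightarrow> 'a tens" where
  "lambda_T H xs = concat (map (\<lambda>(a, b). DCl H b a) xs)"
definition rho_T :: "'a::calg mhdata \<Rightarrow> 'a tens \<Rightarrow> 'a tens" where
  "rho_T H xs = concat (map (\<lambda>(a, b). DCr H a b) xs)"

section \<open>Multiplier bialgebroids\<close>

definition xyaxy :: "'a mult \<Rightarrow> 'a mult \<Rightarrow> 'a \<Rightarrow> 'a mult \<Rightarrow> 'a mult \<Rightarrow> 'a" where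
  "xyaxy x y a x' y' = ract (ract (lact x (lact y a)) x') y'"

definition mult_bialgebroid :: "'a::calg mhdata \<Rightarrow> bool" where
  "mult_bialgebroid H \<longleftrightarrow>
     nondegenerate_alg TYPE('a) \<and> idempotent_alg TYPE('a) \<and>
     msubalg (Bs H) \<and> msubalg (Cs H) \<and>
     anti_iso (Bs H) (Cs H) (SB H) \<and> anti_iso (Cs H) (Bs H) (SC H) \<and>
     lspans (Bs H) \<and> lspans (SB H ` Bs H) \<and> rspans (Cs H) \<and> rspans (SC H ` Cs H) \<and>
     \<comment> \<open>non-degeneracy of the module structures\<close>
     (\<forall>w. (\<forall>a. eq_BAB H (ta1 w a) []) \<longrightarrow> eq_BAB H w []) \<and>
     (\<forall>w. (\<forall>b. eq_BAB H (ta2 w b) []) \<longrightarrow> eq_BAB H w []) \<and>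
     (\<forall>w. (\<forall>a. eq_CAC H (la1 a w) []) \<longrightarrow> eq_CAC H w []) \<and>
     (\<forall>w. (\<forall>b. eq_CAC H (la2 b w) []) \<longrightarrow> eq_CAC H w []) \<and>
     \<comment> \<open>each \<Delta>_B(a) is a (well-defined, linear) endomorphism with T(a\<otimes>1), T(1\<otimes>b)\<close>
     (\<forall>a. (\<forall>xs ys. eq_BAB H xs ys \<longrightarrow> eq_BAB H (DB H a xs) (DB H a ys)) \<and>
          (\<forall>xs ys. eq_BAB H (DB H a (xs @ ys)) (DB H a xs @ DB H a ys)) \<and>
          (\<forall>c xs. eq_BAB H (DB H a (tscale c xs)) (tscale c (DB H a xs))) \<and>
          (\<forall>c. \<exists>t. \<forall>b. eq_BAB H (DB H a [(c, b)]) (ta2 t b)) \<and>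
          (\<forall>b. \<exists>t. \<forall>c. eq_BAB H (DB H a [(c, b)]) (ta1 t c))) \<and>
     \<comment> \<open>\<Delta>_B is an algebra homomorphism\<close>
     (\<forall>a a' xs. eq_BAB H (DB H (a + a') xs) (DB H a xs @ DB H a' xs)) \<and>
     (\<forall>c a xs. eq_BAB H (DB H (cscale c a) xs) (tscale c (DB H a xs))) \<and>
     (\<forall>a a' xs. eq_BAB H (DB H (a * a') xs) (DB H a (DB H a' xs))) \<and>
     \<comment> \<open>each \<Delta>_C(a) is a right-acting endomorphism with (a\<otimes>1)T, (1\<otimes>b)T\<close>
     (\<forall>a. (\<forall>xs ys. eq_CAC H xs ys \<longrightarrow> eq_CAC H (DC H a xs) (DC H a ys)) \<and>
          (\<forall>xs ys. eq_CAC H (DC H a (xs @ ys)) (DC H a xs @ DC H a ys)) \<and>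
          (\<forall>c xs. eq_CAC H (DC H a (tscale c xs)) (tscale c (DC H a xs))) \<and>
          (\<forall>c. \<exists>t. \<forall>b. eq_CAC H (DC H a [(c, b)]) (la2 b t)) \<and>
          (\<forall>b. \<exists>t. \<forall>c. eq_CAC H (DC H a [(c, b)]) (la1 c t))) \<and>
     \<comment> \<open>\<Delta>_C is an algebra homomorphism into right-acting maps: w(TT') = (wT)T'\<close>
     (\<forall>a a' xs. eq_CAC H (DC H (a + a') xs) (DC H a xs @ DC H a' xs)) \<and>
     (\<forall>c a xs. eq_CAC H (DC H (cscale c a) xs) (tscale c (DC H a xs))) \<and>
     (\<forall>a a' xs. eq_CAC H (DC H (a * a') xs) (DC H a' (DC H a xs))) \<and>
     \<comment> \<open>\<Delta>(xyax'y') = (y\<otimes>x)\<Delta>(a)(y'\<otimes>x')\<close>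
     (\<forall>x\<in>Bs H. \<forall>y\<in>Cs H. \<forall>x'\<in>Bs H. \<forall>y'\<in>Cs H. \<forall>a w.
        eq_BAB H (DB H (xyaxy x y a x' y') w) (tlm (y, x) (DB H a (tlm (y', x') w))) \<and>
        eq_CAC H (DC H (xyaxy x y a x' y') w) (trm (DC H a (trm w (y, x))) (y', x'))) \<and>
     \<comment> \<open>coassociativity and mixed coassociativity\<close>
     (\<forall>a b c.
        teq3 (\<lambda>\<psi>. R1 H \<psi> \<and> R2 H \<psi>)
          (concat (map (\<lambda>(p, q). map (\<lambda>(u, v). (u, v, q)) (DBl H p a)) (DBr H b c)))
          (concat (map (\<lambda>(r, s). map (\<lambda>(v, w). (r, v, w)) (DBr H s c)) (DBl H b a))) \<and>
        teq3 (\<lambda>\<psi>. R1' H \<psi> \<and> R2' H \<psi>)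
          (concat (map (\<lambda>(p, q). map (\<lambda>(u, v). (u, v, q)) (DCl H p a)) (DCr H b c)))
          (concat (map (\<lambda>(r, s). map (\<lambda>(v, w). (r, v, w)) (DCr H s c)) (DCl H b a))) \<and>
        teq3 (\<lambda>\<psi>. R1 H \<psi> \<and> R2' H \<psi>)
          (concat (map (\<lambda>(p, q). map (\<lambda>(u, v). (u, v, q)) (DBl H p a)) (DCr H b c)))
          (concat (map (\<lambda>(r, s). map (\<lambda>(v, w). (r, v, w)) (DCr H s c)) (DBl H b a))) \<and>
        teq3 (\<lambda>\<psi>. R1' H \<psi> \<and> R2 H \<psi>)
          (concat (map (\<lambda>(p, q). map (\<lambda>(u, v). (u, v, q)) (DCl H p a)) (DBr H b c)))
          (concat (map (\<lambda>(r, s). map (\<lambda>(v, w). (r, v, w)) (DBr H s c)) (DCl H b a))))"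

section \<open>Counits\<close>

definition left_counit :: "'a::calg mhdata \<Rightarrow> ('a \<Rightarrow> 'a mult) \<Rightarrow> bool" where
  "left_counit H e \<longleftrightarrow> (\<forall>a. e a \<in> Bs H) \<and> mlinear_map e \<and>
     (\<forall>x\<in>Bs H. \<forall>x'\<in>Bs H. \<forall>a. e (lact x (lact (SB H x') a)) = mmul x (mmul (e a) x')) \<and>
     (\<forall>a b xs. eq_BAB H xs (T_rho H [(a, b)]) \<longrightarrow>
        sum_list (map (\<lambda>(c, d). lact (SB H (e c)) d) xs) = a * b) \<and>
     (\<forall>a b xs. eq_BAB H xs (T_lambda H [(a, b)]) \<longrightarrow>
        sum_list (map (\<lambda>(c, d). lact (e d) c) xs) = b * a)"

definition right_counit :: "'a::calg mhdata \<Rightarrow> ('a \<Rightarrow> 'a mult) \<Rightarrow> bool" where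
  "right_counit H e \<longleftrightarrow> (\<forall>a. e a \<in> Cs H) \<and> mlinear_map e \<and>
     (\<forall>y\<in>Cs H. \<forall>y'\<in>Cs H. \<forall>a. e (ract (ract a (SC H y')) y) = mmul y' (mmul (e a) y)) \<and>
     (\<forall>a b xs. eq_CAC H xs (rho_T H [(a, b)]) \<longrightarrow>
        sum_list (map (\<lambda>(c, d). ract d (e c)) xs) = b * a) \<and>
     (\<forall>a b xs. eq_CAC H xs (lambda_T H [(a, b)]) \<longrightarrow>
        sum_list (map (\<lambda>(c, d). ract c (SC H (e d))) xs) = a * b)"

section \<open>Regular multiplier Hopf algebroids and the antipode\<close>

definition I_B :: "'a::calg mhdata \<Rightarrow> 'a mult set" where
  "I_B H = mspan (\<Union>{range w | w. mlinear_map w \<and> range w \<subseteq> Bs H \<and>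
                     (\<forall>x\<in>Bs H. \<forall>a. w (lact x a) = mmul x (w a))})"
definition I_B' :: "'a::calg mhdata \<Rightarrow> 'a mult set" where
  "I_B' H = mspan (\<Union>{range w | w. mlinear_map w \<and> range w \<subseteq> Bs H \<and>
                     (\<forall>x\<in>Bs H. \<forall>a. w (lact (SB H x) a) = mmul (w a) x)})"
definition I_C :: "'a::calg mhdata \<Rightarrow> 'a mult set" where
  "I_C H = mspan (\<Union>{range w | w. mlinear_map w \<and> range w \<subseteq> Cs H \<and>
                     (\<forall>y\<in>Cs H. \<forall>a. w (ract a y) = mmul (w a) y)})"
definition I_C' :: "'a::calg mhdata \<Rightarrow> 'a mult set" where
  "I_C' H = mspan (\<Union>{range w | w. mlinear_map w \<and> range w \<subseteq> Cs H \<and>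
                     (\<forall>y\<in>Cs H. \<forall>a. w (ract a (SC H y)) = mmul y (w a))})"

definition regular_mult_hopf_algebroid :: "'a::calg mhdata \<Rightarrow> bool" where
  "regular_mult_hopf_algebroid H \<longleftrightarrow> mult_bialgebroid H \<and>
     qbij (eq_CAAC H) (eq_BAB H) (T_lambda H) \<and>
     qbij (eq_ABBA H) (eq_BAB H) (T_rho H) \<and>
     qbij (eq_ACCA H) (eq_CAC H) (lambda_T H) \<and>
     qbij (eq_BAAB H) (eq_CAC H) (rho_T H) \<and>
     lspans (SB H ` I_B H) \<and> lspans (I_B' H) \<and> rspans (SC H ` I_C H) \<and> rspans (I_C' H)"

definition is_antipode :: "'a::calg mhdata \<Rightarrow> ('a \<Rightarrow> 'a) \<Rightarrow> bool" where
  "is_antipode H S \<longleftrightarrow> bij S \<and> clinear S \<and> (\<forall>a b. S (a * b) = S b * S a) \<and>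
     (\<forall>x\<in>Bs H. \<forall>y\<in>Cs H. \<forall>x'\<in>Bs H. \<forall>y'\<in>Cs H. \<forall>a.
        S (xyaxy x y a x' y') = lact (SC H y') (lact (SB H x') (ract (ract (S a) (SC H y)) (SB H x)))) \<and>
     (\<exists>eB eC. left_counit H eB \<and> right_counit H eC \<and>
        (\<forall>a b xs. eq_BAB H xs (T_rho H [(a, b)]) \<longrightarrow>
           sum_list (map (\<lambda>(c, d). S c * d) xs) = lact (SC H (eC a)) b) \<and>
        (\<forall>a b xs. eq_CAC H xs (lambda_T H [(a, b)]) \<longrightarrow>
           sum_list (map (\<lambda>(c, d). c * S d) xs) = ract a (SB H (eB b))))"

end

theory Submission
  imports Defs
begin

lemma cscale_zero_right[simp]: "cscale c (0::'a::calg) = 0"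
proof -
  have "cscale c (0+0::'a) = cscale c 0 + cscale c 0" by (rule cscale_add_right)
  thus ?thesis by simp
qed

lemma cscale_zero_left[simp]: "cscale 0 (a::'a::calg) = 0"
proof -
  have "cscale (0+0) a = cscale 0 a + cscale 0 a" by (rule cscale_add_left)
  thus ?thesis by simp
qed

lemma cscale_neg1: "cscale (-1) (a::'a::calg) = - a"
proof -
  have "cscale (1 + -1) a = cscale 1 a + cscale (-1) a" by (rule cscale_add_left)
  hence h: "a + cscale (-1) a = 0" by (simp add: cscale_one)
  have "cscale (-1) a = -a + (a + cscale (-1) a)" by (simp add: add.assoc[symmetric])
  also have "\<dots> = -a" by (simp add: h)
  finally show ?thesis .
qed

lemma cscale_sum_list: "cscale c (sum_list (map f L)) = sum_list (map (\<lambda>x. cscale c (f x)) (L::'b list))"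
  for f :: "'b \<Rightarrow> 'a::calg"
  by (induct L) (simp_all add: cscale_add_right)

lemma sum_list_mult_right: "sum_list (map f L) * (k::'a::ring) = sum_list (map (\<lambda>x. f x * k) L)"
  by (induct L) (simp_all add: distrib_right)

lemma sum_list_mult_left: "(k::'a::ring) * sum_list (map f L) = sum_list (map (\<lambda>x. k * f x) L)"
  by (induct L) (simp_all add: distrib_left)

lemma tev_Nil[simp]: "tev \<phi> [] = 0" by (simp add: tev_def)
lemma tev_Cons[simp]: "tev \<phi> ((a,b)#xs) = \<phi> a b + tev \<phi> xs" by (simp add: tev_def)
lemma tev_append[simp]: "tev \<phi> (xs @ ys) = tev \<phi> xs + tev \<phi> ys" by (simp add: tev_def)

lemma tev_concat_map:
  "tev \<phi> (concat (map (\<lambda>(a,b). f a b) xs)) = tev (\<lambda>a b. tev \<phi> (f a b)) xs"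
  by (induct xs) (auto simp: tev_def)

lemma tev_map:
  "tev \<phi> (map (\<lambda>(a,b). (g a b, h a b)) xs) = tev (\<lambda>a b. \<phi> (g a b) (h a b)) xs"
  by (induct xs) (auto simp: tev_def)

lemma tev_cong: "(\<And>a b. (a,b) \<in> set xs \<Longrightarrow> \<phi> a b = \<psi> a b) \<Longrightarrow> tev \<phi> xs = tev \<psi> xs"
  by (induct xs) (auto simp: tev_def)

lemma teq_refl[intro]: "teq P xs xs" by (simp add: teq_def)
lemma teq_sym: "teq P xs ys \<Longrightarrow> teq P ys xs" by (simp add: teq_def)
lemma teq_trans[trans]: "teq P xs ys \<Longrightarrow> teq P ys zs \<Longrightarrow> teq P xs zs" by (simp add: teq_def)
lemma teq_append: "teq P xs xs' \<Longrightarrow> teq P ys ys' \<Longrightarrow> teq P (xs @ ys) (xs' @ ys')"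
  by (simp add: teq_def)
lemma teq_eq: "xs = ys \<Longrightarrow> teq P xs ys" by auto

lemma teqI: "(\<And>\<phi>. bilin \<phi> \<Longrightarrow> P \<phi> \<Longrightarrow> tev \<phi> xs = tev \<phi> ys) \<Longrightarrow> teq P xs ys"
  by (auto simp: teq_def)
lemma teqD: "teq P xs ys \<Longrightarrow> bilin \<phi> \<Longrightarrow> P \<phi> \<Longrightarrow> tev \<phi> xs = tev \<phi> ys"
  by (auto simp: teq_def)

lemma teq_concat_map:
  assumes "teq P xs ys"
    and "\<And>\<phi>. bilin \<phi> \<Longrightarrow> Q \<phi> \<Longrightarrow> bilin (\<lambda>a b. tev \<phi> (f a b)) \<and> P (\<lambda>a b. tev \<phi> (f a b))"
  shows "teq Q (concat (map (\<lambda>(a,b). f a b) xs)) (concat (map (\<lambda>(a,b). f a b) ys))"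
  using assms by (auto simp: teq_def tev_concat_map)

lemma teq_map:
  assumes "teq P xs ys"
    and "\<And>\<phi>. bilin \<phi> \<Longrightarrow> Q \<phi> \<Longrightarrow> bilin (\<lambda>a b. \<phi> (g a b) (h a b)) \<and> P (\<lambda>a b. \<phi> (g a b) (h a b))"
  shows "teq Q (map (\<lambda>(a,b). (g a b, h a b)) xs) (map (\<lambda>(a,b). (g a b, h a b)) ys)"
  using assms by (auto simp: teq_def tev_map)

lemma bilinD:
  assumes "bilin \<phi>"
  shows "\<phi> (a + a') b = \<phi> a b + \<phi> a' b" "\<phi> a (b + b') = \<phi> a b + \<phi> a b'"
    "\<phi> (cscale c a) b = c * \<phi> a b" "\<phi> a (cscale c b) = c * \<phi> a b"
  using assms by (auto simp: bilin_def)

lemma bilin_zero1: "bilin \<phi> \<Longrightarrow> \<phi> 0 b = 0"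
  using bilinD(1)[of \<phi> 0 0 b] by simp
lemma bilin_zero2: "bilin \<phi> \<Longrightarrow> \<phi> a 0 = 0"
  using bilinD(2)[of \<phi> a 0 0] by simp

lemma bilin_sum1: "bilin \<phi> \<Longrightarrow> \<phi> (sum_list (map f L)) b = sum_list (map (\<lambda>x. \<phi> (f x) b) L)"
  by (induct L) (simp_all add: bilin_zero1 bilinD)
lemma bilin_sum2: "bilin \<phi> \<Longrightarrow> \<phi> a (sum_list (map f L)) = sum_list (map (\<lambda>x. \<phi> a (f x)) L)"
  by (induct L) (simp_all add: bilin_zero2 bilinD)

lemma bilinI:
  assumes "\<And>a a' b. \<phi> (a + a') b = \<phi> a b + \<phi> a' b"
    "\<And>a b b'. \<phi> a (b + b') = \<phi> a b + \<phi> a b'"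
    "\<And>c a b. \<phi> (cscale c a) b = c * \<phi> a b" "\<And>c a b. \<phi> a (cscale c b) = c * \<phi> a b"
  shows "bilin \<phi>" using assms by (auto simp: bilin_def)

lemma tev_tscale: "bilin \<phi> \<Longrightarrow> tev \<phi> (tscale c xs) = c * tev \<phi> xs"
  by (induct xs) (auto simp: tscale_def bilinD distrib_left)

lemma tev_sum_list1: "bilin \<phi> \<Longrightarrow> tev (\<lambda>a b. \<phi> (f a b) k) xs = \<phi> (sum_list (map (\<lambda>(a,b). f a b) xs)) k"
  by (induct xs) (auto simp: bilinD bilin_zero1)
lemma tev_sum_list2: "bilin \<phi> \<Longrightarrow> tev (\<lambda>a b. \<phi> k (f a b)) xs = \<phi> k (sum_list (map (\<lambda>(a,b). f a b) xs))"
  by (induct xs) (auto simp: bilinD bilin_zero2)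

lemma teq_diff_nil:
  assumes "teq P (xs @ tscale (-1) ys) []" shows "teq P xs ys"
proof (rule teqI)
  fix \<phi> assume "bilin \<phi>" "P \<phi>"
  with assms have "tev \<phi> xs + (-1) * tev \<phi> ys = 0" by (simp add: teq_def tev_tscale)
  thus "tev \<phi> xs = tev \<phi> ys" by simp
qed

section \<open>Multipliers\<close>

lemma multD: "m \<in> multipliers \<Longrightarrow> a * lact m b = ract a m * b"
  by (auto simp: multipliers_def lact_def ract_def)

locale nondeg =
  assumes nd: "nondegenerate_alg TYPE('a::calg)"
begin

lemma nd_left: "(\<And>b. (a::'a) * b = 0) \<Longrightarrow> a = 0" using nd unfolding nondegenerate_alg_def by blast
lemma nd_right: "(\<And>b. b * (a::'a) = 0) \<Longrightarrow> a = 0" using nd unfolding nondegenerate_alg_def by blast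

lemma eq_by_left: "(\<And>d. d * (a::'a) = d * b) \<Longrightarrow> a = b"
  using nd_right[of "a - b"] by (simp add: right_diff_distrib)
lemma eq_by_right: "(\<And>d. (a::'a) * d = b * d) \<Longrightarrow> a = b"
  using nd_left[of "a - b"] by (simp add: left_diff_distrib)

lemma lact_mult: "m \<in> multipliers \<Longrightarrow> lact m ((a::'a) * b) = lact m a * b"
proof (rule eq_by_left)
  fix d assume m: "m \<in> multipliers"
  have "d * lact m (a * b) = ract d m * (a * b)" by (rule multD[OF m])
  also have "\<dots> = (ract d m * a) * b" by (simp add: mult.assoc)
  also have "\<dots> = (d * lact m a) * b" by (simp add: multD[OF m])
  finally show "d * lact m (a * b) = d * (lact m a * b)" by (simp add: mult.assoc)
qed
lemma ract_mult: "m \<in> multipliers \<Longrightarrow> ract ((a::'a) * b) m = a * ract b m"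
proof (rule eq_by_right)
  fix d assume m: "m \<in> multipliers"
  have "ract (a * b) m * d = (a * b) * lact m d" by (rule multD[OF m, symmetric])
  also have "\<dots> = a * (b * lact m d)" by (simp add: mult.assoc)
  also have "\<dots> = a * (ract b m * d)" by (simp add: multD[OF m])
  finally show "ract (a * b) m * d = a * ract b m * d" by (simp add: mult.assoc)
qed
lemma lact_add: "m \<in> multipliers \<Longrightarrow> lact m ((a::'a) + b) = lact m a + lact m b"
  by (rule eq_by_left) (simp add: multD distrib_left)
lemma ract_add: "m \<in> multipliers \<Longrightarrow> ract ((a::'a) + b) m = ract a m + ract b m"
  by (rule eq_by_right) (simp add: multD[symmetric] distrib_right)
lemma lact_cscale: "m \<in> multipliers \<Longrightarrow> lact m (cscale c (a::'a)) = cscale c (lact m a)"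
proof (rule eq_by_left)
  fix d assume m: "m \<in> multipliers"
  have "d * lact m (cscale c a) = ract d m * cscale c a" by (rule multD[OF m])
  also have "\<dots> = cscale c (ract d m * a)" by (simp add: cscale_mult_right)
  also have "\<dots> = cscale c (d * lact m a)" by (simp add: multD[OF m])
  finally show "d * lact m (cscale c a) = d * cscale c (lact m a)" by (simp add: cscale_mult_right)
qed
lemma ract_cscale: "m \<in> multipliers \<Longrightarrow> ract (cscale c (a::'a)) m = cscale c (ract a m)"
proof (rule eq_by_right)
  fix d assume m: "m \<in> multipliers"
  have "ract (cscale c a) m * d = cscale c a * lact m d" by (rule multD[OF m, symmetric])
  also have "\<dots> = cscale c (a * lact m d)" by (simp add: cscale_mult_left)
  also have "\<dots> = cscale c (ract a m * d)" by (simp add: multD[OF m])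
  finally show "ract (cscale c a) m * d = cscale c (ract a m) * d" by (simp add: cscale_mult_left)
qed
lemma lact_zero: "m \<in> multipliers \<Longrightarrow> lact m (0::'a) = 0"
  using lact_add[where m=m and a=0 and b=0] by simp
lemma ract_zero: "m \<in> multipliers \<Longrightarrow> ract (0::'a) m = 0"
  using ract_add[where m=m and a=0 and b=0] by simp
lemma lact_sum: "m \<in> multipliers \<Longrightarrow> lact m (sum_list (map (f::_\<Rightarrow>'a) L)) = sum_list (map (\<lambda>x. lact m (f x)) L)"
  by (induct L) (simp_all add: lact_zero lact_add)
lemma ract_sum: "m \<in> multipliers \<Longrightarrow> ract (sum_list (map (f::_\<Rightarrow>'a) L)) m = sum_list (map (\<lambda>x. ract (f x) m) L)"
  by (induct L) (simp_all add: ract_zero ract_add)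

lemma lact_ract: "m \<in> multipliers \<Longrightarrow> n \<in> multipliers \<Longrightarrow> lact m (ract (a::'a) n) = ract (lact m a) n"
proof (rule eq_by_left, rule eq_by_right)
  fix d e :: 'a
  assume m: "m \<in> multipliers" and n: "n \<in> multipliers"
  have "d * lact m (ract a n) * e = ract d m * ract a n * e" by (simp add: multD m)
  also have "\<dots> = ract d m * (a * lact n e)" by (simp add: mult.assoc multD[OF n])
  also have "\<dots> = d * lact m a * lact n e" by (simp add: mult.assoc[symmetric] multD[OF m])
  also have "\<dots> = ract (d * lact m a) n * e" by (simp add: multD[OF n])
  also have "\<dots> = d * ract (lact m a) n * e" by (simp add: ract_mult n)
  finally show "d * lact m (ract a n) * e = d * ract (lact m a) n * e" .
qed

lemma mult_lact: "m \<in> multipliers \<Longrightarrow> ract (a::'a) m * b = a * lact m b" by (simp add: multD)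

end

lemma lact_mmul: "lact (mmul m n) a = lact m (lact n a)" by (simp add: lact_def mmul_def)
lemma ract_mmul: "ract a (mmul m n) = ract (ract a m) n" by (simp add: ract_def mmul_def)
lemma lact_madd: "lact (madd m n) a = lact m a + lact n a" by (simp add: lact_def madd_def)
lemma ract_madd: "ract a (madd m n) = ract a m + ract a n" by (simp add: ract_def madd_def)
lemma lact_msc: "lact (msc c m) a = cscale c (lact m a)" by (simp add: lact_def msc_def)
lemma ract_msc: "ract a (msc c m) = cscale c (ract a m)" by (simp add: ract_def msc_def)
lemma lact_mzero: "lact mzero a = 0" by (simp add: lact_def mzero_def)
lemma ract_mzero: "ract a mzero = 0" by (simp add: ract_def mzero_def)



locale rmha = nondeg +
  fixes H :: "'a::calg mhdata" and S :: "'a \<Rightarrow> 'a" and eB eC :: "'a \<Rightarrow> 'a mult"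
  assumes reg: "regular_mult_hopf_algebroid H"
    and Sbij: "bij S" and Slin: "clinear S" and Santi: "\<forall>a b. S (a * b) = S b * S a"
    and Sxy: "\<forall>x\<in>Bs H. \<forall>y\<in>Cs H. \<forall>x'\<in>Bs H. \<forall>y'\<in>Cs H. \<forall>a.
        S (xyaxy x y a x' y') = lact (SC H y') (lact (SB H x') (ract (ract (S a) (SC H y)) (SB H x)))"
    and lc: "left_counit H eB" and rc: "right_counit H eC"
    and antiR: "\<forall>a b xs. eq_BAB H xs (T_rho H [(a, b)]) \<longrightarrow>
           sum_list (map (\<lambda>(c, d). S c * d) xs) = lact (SC H (eC a)) b"
    and antiL: "\<forall>a b xs. eq_CAC H xs (lambda_T H [(a, b)]) \<longrightarrow>
           sum_list (map (\<lambda>(c, d). c * S d) xs) = ract a (SB H (eB b))"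
begin

lemma mb: "mult_bialgebroid H" using reg by (simp add: regular_mult_hopf_algebroid_def)
lemmas mbD = mb[unfolded mult_bialgebroid_def]

lemma msB: "msubalg (Bs H)" using mbD by (elim conjE) assumption
lemma msC: "msubalg (Cs H)" using mbD by (elim conjE) assumption
lemma aiB: "anti_iso (Bs H) (Cs H) (SB H)" using mbD by (elim conjE) assumption
lemma aiC: "anti_iso (Cs H) (Bs H) (SC H)" using mbD by (elim conjE) assumption
lemma spB: "lspans (Bs H)" using mbD by (elim conjE) assumption
lemma spSB: "lspans (SB H ` Bs H)" using mbD by (elim conjE) assumption
lemma spC: "rspans (Cs H)" using mbD by (elim conjE) assumption
lemma spSC: "rspans (SC H ` Cs H)" using mbD by (elim conjE) assumption
lemma nd1: "\<forall>w. (\<forall>a. eq_BAB H (ta1 w a) []) \<longrightarrow> eq_BAB H w []" using mbD by (elim conjE) assumption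
lemma nd2: "\<forall>w. (\<forall>b. eq_BAB H (ta2 w b) []) \<longrightarrow> eq_BAB H w []" using mbD by (elim conjE) assumption
lemma nd3: "\<forall>w. (\<forall>a. eq_CAC H (la1 a w) []) \<longrightarrow> eq_CAC H w []" using mbD by (elim conjE) assumption
lemma nd4: "\<forall>w. (\<forall>b. eq_CAC H (la2 b w) []) \<longrightarrow> eq_CAC H w []" using mbD by (elim conjE) assumption
lemma DBax: "\<forall>a. (\<forall>xs ys. eq_BAB H xs ys \<longrightarrow> eq_BAB H (DB H a xs) (DB H a ys)) \<and>
          (\<forall>xs ys. eq_BAB H (DB H a (xs @ ys)) (DB H a xs @ DB H a ys)) \<and>
          (\<forall>c xs. eq_BAB H (DB H a (tscale c xs)) (tscale c (DB H a xs))) \<and>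
          (\<forall>c. \<exists>t. \<forall>b. eq_BAB H (DB H a [(c, b)]) (ta2 t b)) \<and>
          (\<forall>b. \<exists>t. \<forall>c. eq_BAB H (DB H a [(c, b)]) (ta1 t c))" using mbD by (elim conjE) assumption
lemma DBadd: "\<forall>a a' xs. eq_BAB H (DB H (a + a') xs) (DB H a xs @ DB H a' xs)" using mbD by (elim conjE) assumption
lemma DBsc: "\<forall>c a xs. eq_BAB H (DB H (cscale c a) xs) (tscale c (DB H a xs))" using mbD by (elim conjE) assumption
lemma DBmul: "\<forall>a a' xs. eq_BAB H (DB H (a * a') xs) (DB H a (DB H a' xs))" using mbD by (elim conjE) assumption
lemma DCax: "\<forall>a. (\<forall>xs ys. eq_CAC H xs ys \<longrightarrow> eq_CAC H (DC H a xs) (DC H a ys)) \<and>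
          (\<forall>xs ys. eq_CAC H (DC H a (xs @ ys)) (DC H a xs @ DC H a ys)) \<and>
          (\<forall>c xs. eq_CAC H (DC H a (tscale c xs)) (tscale c (DC H a xs))) \<and>
          (\<forall>c. \<exists>t. \<forall>b. eq_CAC H (DC H a [(c, b)]) (la2 b t)) \<and>
          (\<forall>b. \<exists>t. \<forall>c. eq_CAC H (DC H a [(c, b)]) (la1 c t))" using mbD by (elim conjE) assumption
lemma DCadd: "\<forall>a a' xs. eq_CAC H (DC H (a + a') xs) (DC H a xs @ DC H a' xs)" using mbD by (elim conjE) assumption
lemma DCsc: "\<forall>c a xs. eq_CAC H (DC H (cscale c a) xs) (tscale c (DC H a xs))" using mbD by (elim conjE) assumption
lemma DCmul: "\<forall>a a' xs. eq_CAC H (DC H (a * a') xs) (DC H a' (DC H a xs))" using mbD by (elim conjE) assumption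
lemma coass: "\<forall>a b c.
        teq3 (\<lambda>\<psi>. R1 H \<psi> \<and> R2 H \<psi>)
          (concat (map (\<lambda>(p, q). map (\<lambda>(u, v). (u, v, q)) (DBl H p a)) (DBr H b c)))
          (concat (map (\<lambda>(r, s). map (\<lambda>(v, w). (r, v, w)) (DBr H s c)) (DBl H b a))) \<and>
        teq3 (\<lambda>\<psi>. R1' H \<psi> \<and> R2' H \<psi>)
          (concat (map (\<lambda>(p, q). map (\<lambda>(u, v). (u, v, q)) (DCl H p a)) (DCr H b c)))
          (concat (map (\<lambda>(r, s). map (\<lambda>(v, w). (r, v, w)) (DCr H s c)) (DCl H b a))) \<and>
        teq3 (\<lambda>\<psi>. R1 H \<psi> \<and> R2' H \<psi>)
          (concat (map (\<lambda>(p, q). map (\<lambda>(u, v). (u, v, q)) (DBl H p a)) (DCr H b c)))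
          (concat (map (\<lambda>(r, s). map (\<lambda>(v, w). (r, v, w)) (DCr H s c)) (DBl H b a))) \<and>
        teq3 (\<lambda>\<psi>. R1' H \<psi> \<and> R2 H \<psi>)
          (concat (map (\<lambda>(p, q). map (\<lambda>(u, v). (u, v, q)) (DCl H p a)) (DBr H b c)))
          (concat (map (\<lambda>(r, s). map (\<lambda>(v, w). (r, v, w)) (DBr H s c)) (DCl H b a)))"
  using mbD by (elim conjE) assumption

lemma coass3: "teq3 (\<lambda>\<psi>. R1 H \<psi> \<and> R2' H \<psi>)
          (concat (map (\<lambda>(p, q). map (\<lambda>(u, v). (u, v, q)) (DBl H p a)) (DCr H b c)))
          (concat (map (\<lambda>(r, s). map (\<lambda>(v, w). (r, v, w)) (DCr H s c)) (DBl H b a)))"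
  using coass by blast

lemma qTl: "qbij (eq_CAAC H) (eq_BAB H) (T_lambda H)" using reg by (simp add: regular_mult_hopf_algebroid_def)
lemma qTr: "qbij (eq_ABBA H) (eq_BAB H) (T_rho H)" using reg by (simp add: regular_mult_hopf_algebroid_def)
lemma qlT: "qbij (eq_ACCA H) (eq_CAC H) (lambda_T H)" using reg by (simp add: regular_mult_hopf_algebroid_def)
lemma qrT: "qbij (eq_BAAB H) (eq_CAC H) (rho_T H)" using reg by (simp add: regular_mult_hopf_algebroid_def)

lemma BsM: "x \<in> Bs H \<Longrightarrow> x \<in> multipliers" using msB by (auto simp: msubalg_def)
lemma CsM: "y \<in> Cs H \<Longrightarrow> y \<in> multipliers" using msC by (auto simp: msubalg_def)
lemma Bs_mmul: "x \<in> Bs H \<Longrightarrow> x' \<in> Bs H \<Longrightarrow> mmul x x' \<in> Bs H" using msB by (auto simp: msubalg_def)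
lemma Cs_mmul: "x \<in> Cs H \<Longrightarrow> x' \<in> Cs H \<Longrightarrow> mmul x x' \<in> Cs H" using msC by (auto simp: msubalg_def)
lemma SB_in: "x \<in> Bs H \<Longrightarrow> SB H x \<in> Cs H" using aiB by (auto simp: anti_iso_def bij_betw_def)
lemma SC_in: "y \<in> Cs H \<Longrightarrow> SC H y \<in> Bs H" using aiC by (auto simp: anti_iso_def bij_betw_def)
lemma SB_img: "SB H ` Bs H = Cs H" using aiB by (auto simp: anti_iso_def bij_betw_def)
lemma SC_img: "SC H ` Cs H = Bs H" using aiC by (auto simp: anti_iso_def bij_betw_def)
lemma SB_mmul: "x \<in> Bs H \<Longrightarrow> x' \<in> Bs H \<Longrightarrow> SB H (mmul x x') = mmul (SB H x') (SB H x)"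
  using aiB by (auto simp: anti_iso_def)
lemma SC_mmul: "x \<in> Cs H \<Longrightarrow> x' \<in> Cs H \<Longrightarrow> SC H (mmul x x') = mmul (SC H x') (SC H x)"
  using aiC by (auto simp: anti_iso_def)
lemma SB_msc: "x \<in> Bs H \<Longrightarrow> SB H (msc c x) = msc c (SB H x)"
  using aiB by (auto simp: anti_iso_def mlinear_on_def)
lemma SC_msc: "x \<in> Cs H \<Longrightarrow> SC H (msc c x) = msc c (SC H x)"
  using aiC by (auto simp: anti_iso_def mlinear_on_def)
lemma spC': "lspans (Cs H)" using spSB SB_img by simp
lemma spB': "rspans (Bs H)" using spSC SC_img by simp

lemma S_add: "S (a + b) = S a + S b" using Slin by (simp add: clinear_def)
lemma S_sc: "S (cscale c a) = cscale c (S a)" using Slin by (simp add: clinear_def)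
lemma S_zero: "S 0 = 0" using S_add[of 0 0] by simp
lemma S_mult: "S (a * b) = S b * S a" using Santi by simp
lemma S_sum: "S (sum_list (map f L)) = sum_list (map (\<lambda>x. S (f x)) L)"
  by (induct L) (simp_all add: S_zero S_add)

definition "PB \<phi> \<longleftrightarrow> (\<forall>x\<in>Bs H. \<forall>a b. \<phi> (lact x a) b = \<phi> a (lact (SB H x) b))"
definition "PC \<phi> \<longleftrightarrow> (\<forall>y\<in>Cs H. \<forall>a b. \<phi> (ract a (SC H y)) b = \<phi> a (ract b y))"
definition "PABBA \<phi> \<longleftrightarrow> (\<forall>x\<in>Bs H. \<forall>a b. \<phi> (ract a x) b = \<phi> a (lact x b))"
definition "PACCA \<phi> \<longleftrightarrow> (\<forall>y\<in>Cs H. \<forall>a b. \<phi> (ract a y) b = \<phi> a (lact y b))"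
definition "PCAAC \<phi> \<longleftrightarrow> (\<forall>y\<in>Cs H. \<forall>a b. \<phi> (lact y a) b = \<phi> a (ract b y))"
definition "PBAAB \<phi> \<longleftrightarrow> (\<forall>x\<in>Bs H. \<forall>a b. \<phi> (lact x a) b = \<phi> a (ract b x))"

lemma eqB: "eq_BAB H = teq PB" by (simp add: eq_BAB_def PB_def[abs_def])
lemma eqC: "eq_CAC H = teq PC" by (simp add: eq_CAC_def PC_def[abs_def])
lemma eqABBA: "eq_ABBA H = teq PABBA" by (simp add: eq_ABBA_def PABBA_def[abs_def])
lemma eqACCA: "eq_ACCA H = teq PACCA" by (simp add: eq_ACCA_def PACCA_def[abs_def])
lemma eqCAAC: "eq_CAAC H = teq PCAAC" by (simp add: eq_CAAC_def PCAAC_def[abs_def])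
lemma eqBAAB: "eq_BAAB H = teq PBAAB" by (simp add: eq_BAAB_def PBAAB_def[abs_def])

lemma PBD: "PB \<phi> \<Longrightarrow> x \<in> Bs H \<Longrightarrow> \<phi> (lact x a) b = \<phi> a (lact (SB H x) b)" by (simp add: PB_def)
lemma PCD: "PC \<phi> \<Longrightarrow> y \<in> Cs H \<Longrightarrow> \<phi> (ract a (SC H y)) b = \<phi> a (ract b y)" by (simp add: PC_def)

lemma teq_add_l: "teq P [(a + a', b)] ([(a, b)] @ [(a', b)])"
  by (rule teqI) (simp add: bilinD)
lemma teq_add_r: "teq P [(a, b + b')] ([(a, b)] @ [(a, b')])"
  by (rule teqI) (simp add: bilinD)
lemma teq_sc_l: "teq P [(cscale c a, b)] (tscale c [(a, b)])"
  by (rule teqI) (simp add: bilinD tev_tscale)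
lemma teq_sc_r: "teq P [(a, cscale c b)] (tscale c [(a, b)])"
  by (rule teqI) (simp add: bilinD tev_tscale)
lemma tscale_append[simp]: "tscale c (xs @ ys) = tscale c xs @ tscale c ys" by (simp add: tscale_def)

lemma tev_ta1: "tev \<phi> (ta1 X e) = tev (\<lambda>a b. \<phi> (a * e) b) X"
  unfolding ta1_def by (rule tev_map)
lemma tev_ta2: "tev \<phi> (ta2 X e) = tev (\<lambda>a b. \<phi> a (b * e)) X"
  unfolding ta2_def by (rule tev_map)
lemma tev_la1: "tev \<phi> (la1 e X) = tev (\<lambda>a b. \<phi> (e * a) b) X"
  unfolding la1_def by (rule tev_map)
lemma tev_la2: "tev \<phi> (la2 e X) = tev (\<lambda>a b. \<phi> a (e * b)) X"
  unfolding la2_def by (rule tev_map)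
lemma tev_tflip: "tev \<phi> (tflip X) = tev (\<lambda>a b. \<phi> b a) X"
  unfolding tflip_def by (rule tev_map)
lemma tev_tmap1: "tev \<phi> (tmap1 f X) = tev (\<lambda>a b. \<phi> (f a) b) X"
  unfolding tmap1_def by (rule tev_map)
lemma tev_tmap2: "tev \<phi> (tmap2 f X) = tev (\<lambda>a b. \<phi> a (f b)) X"
  unfolding tmap2_def by (rule tev_map)

section \<open>Module actions respect the balanced tensor products\<close>

lemma ta1_resp: assumes "eq_BAB H X Y" shows "eq_BAB H (ta1 X e) (ta1 Y e)"
  unfolding eqB
proof (rule teqI)
  fix \<phi> assume b: "bilin \<phi>" and p: "PB \<phi>"
  have "bilin (\<lambda>a b. \<phi> (a * e) b)" using b by (rule_tac bilinI) (simp_all add: bilinD distrib_right cscale_mult_left[symmetric])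
  moreover have "PB (\<lambda>a b. \<phi> (a * e) b)" using p by (simp add: PB_def lact_mult[symmetric] BsM)
  ultimately show "tev \<phi> (ta1 X e) = tev \<phi> (ta1 Y e)" using assms by (simp add: tev_ta1 eqB teqD)
qed

lemma ta2_resp: assumes "eq_BAB H X Y" shows "eq_BAB H (ta2 X e) (ta2 Y e)"
  unfolding eqB
proof (rule teqI)
  fix \<phi> assume b: "bilin \<phi>" and p: "PB \<phi>"
  have "bilin (\<lambda>a b. \<phi> a (b * e))" using b by (rule_tac bilinI) (simp_all add: bilinD distrib_right cscale_mult_left[symmetric])
  moreover have "PB (\<lambda>a b. \<phi> a (b * e))" using p by (simp add: PB_def lact_mult BsM CsM SB_in)
  ultimately show "tev \<phi> (ta2 X e) = tev \<phi> (ta2 Y e)" using assms by (simp add: tev_ta2 eqB teqD)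
qed

lemma la1_resp: assumes "eq_CAC H X Y" shows "eq_CAC H (la1 e X) (la1 e Y)"
  unfolding eqC
proof (rule teqI)
  fix \<phi> assume b: "bilin \<phi>" and p: "PC \<phi>"
  have "bilin (\<lambda>a b. \<phi> (e * a) b)" using b by (rule_tac bilinI) (simp_all add: bilinD distrib_left cscale_mult_right[symmetric])
  moreover have "PC (\<lambda>a b. \<phi> (e * a) b)" using p by (simp add: PC_def ract_mult[symmetric] CsM SC_in BsM)
  ultimately show "tev \<phi> (la1 e X) = tev \<phi> (la1 e Y)" using assms by (simp add: tev_la1 eqC teqD)
qed

lemma la2_resp: assumes "eq_CAC H X Y" shows "eq_CAC H (la2 e X) (la2 e Y)"
  unfolding eqC
proof (rule teqI)
  fix \<phi> assume b: "bilin \<phi>" and p: "PC \<phi>"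
  have "bilin (\<lambda>a b. \<phi> a (e * b))" using b by (rule_tac bilinI) (simp_all add: bilinD distrib_left cscale_mult_right[symmetric])
  moreover have "PC (\<lambda>a b. \<phi> a (e * b))" using p by (simp add: PC_def ract_mult CsM)
  ultimately show "tev \<phi> (la2 e X) = tev \<phi> (la2 e Y)" using assms by (simp add: tev_la2 eqC teqD)
qed

lemma ta1_ta1: "ta1 (ta1 X a) b = ta1 X (a * b)" by (simp add: ta1_def case_prod_beta mult.assoc)
lemma ta2_ta2: "ta2 (ta2 X a) b = ta2 X (a * b)" by (simp add: ta2_def case_prod_beta mult.assoc)
lemma la1_la1: "la1 a (la1 b X) = la1 (a * b) X" by (simp add: la1_def case_prod_beta mult.assoc)
lemma la2_la2: "la2 a (la2 b X) = la2 (a * b) X" by (simp add: la2_def case_prod_beta mult.assoc)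
lemma ta1_ta2: "ta1 (ta2 X a) b = ta2 (ta1 X b) a" by (simp add: ta1_def ta2_def case_prod_beta)
lemma la1_la2: "la1 a (la2 b X) = la2 b (la1 a X)" by (simp add: la1_def la2_def case_prod_beta)
lemma ta1_append: "ta1 (X @ Y) e = ta1 X e @ ta1 Y e" by (simp add: ta1_def)
lemma ta2_append: "ta2 (X @ Y) e = ta2 X e @ ta2 Y e" by (simp add: ta2_def)
lemma la1_append: "la1 e (X @ Y) = la1 e X @ la1 e Y" by (simp add: la1_def)
lemma la2_append: "la2 e (X @ Y) = la2 e X @ la2 e Y" by (simp add: la2_def)
lemma ta1_tscale: "ta1 (tscale c X) e = tscale c (ta1 X e)" by (simp add: ta1_def tscale_def case_prod_beta cscale_mult_left)
lemma ta2_tscale: "ta2 (tscale c X) e = tscale c (ta2 X e)" by (simp add: ta2_def tscale_def case_prod_beta)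
lemma la1_tscale: "la1 e (tscale c X) = tscale c (la1 e X)" by (simp add: la1_def tscale_def case_prod_beta cscale_mult_right)
lemma la2_tscale: "la2 e (tscale c X) = tscale c (la2 e X)" by (simp add: la2_def tscale_def case_prod_beta)

lemma ndB1: assumes "\<And>e. eq_BAB H (ta1 X e) (ta1 Y e)" shows "eq_BAB H X Y"
proof -
  have "eq_BAB H (X @ tscale (-1) Y) []"
  proof (rule nd1[rule_format], unfold eqB, rule teqI)
    fix e \<phi> assume "bilin \<phi>" "PB \<phi>"
    hence "tev \<phi> (ta1 X e) = tev \<phi> (ta1 Y e)" using assms[of e] by (simp add: eqB teqD)
    thus "tev \<phi> (ta1 (X @ tscale (-1) Y) e) = tev \<phi> []"
      by (simp add: ta1_append ta1_tscale tev_tscale \<open>bilin \<phi>\<close>)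
  qed
  thus ?thesis unfolding eqB by (rule teq_diff_nil)
qed

lemma ndB2: assumes "\<And>e. eq_BAB H (ta2 X e) (ta2 Y e)" shows "eq_BAB H X Y"
proof -
  have "eq_BAB H (X @ tscale (-1) Y) []"
  proof (rule nd2[rule_format], unfold eqB, rule teqI)
    fix e \<phi> assume "bilin \<phi>" "PB \<phi>"
    hence "tev \<phi> (ta2 X e) = tev \<phi> (ta2 Y e)" using assms[of e] by (simp add: eqB teqD)
    thus "tev \<phi> (ta2 (X @ tscale (-1) Y) e) = tev \<phi> []"
      by (simp add: ta2_append ta2_tscale tev_tscale \<open>bilin \<phi>\<close>)
  qed
  thus ?thesis unfolding eqB by (rule teq_diff_nil)
qed

lemma ndC1: assumes "\<And>e. eq_CAC H (la1 e X) (la1 e Y)" shows "eq_CAC H X Y"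
proof -
  have "eq_CAC H (X @ tscale (-1) Y) []"
  proof (rule nd3[rule_format], unfold eqC, rule teqI)
    fix e \<phi> assume "bilin \<phi>" "PC \<phi>"
    hence "tev \<phi> (la1 e X) = tev \<phi> (la1 e Y)" using assms[of e] by (simp add: eqC teqD)
    thus "tev \<phi> (la1 e (X @ tscale (-1) Y)) = tev \<phi> []"
      by (simp add: la1_append la1_tscale tev_tscale \<open>bilin \<phi>\<close>)
  qed
  thus ?thesis unfolding eqC by (rule teq_diff_nil)
qed

lemma ndC2: assumes "\<And>e. eq_CAC H (la2 e X) (la2 e Y)" shows "eq_CAC H X Y"
proof -
  have "eq_CAC H (X @ tscale (-1) Y) []"
  proof (rule nd4[rule_format], unfold eqC, rule teqI)
    fix e \<phi> assume "bilin \<phi>" "PC \<phi>"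
    hence "tev \<phi> (la2 e X) = tev \<phi> (la2 e Y)" using assms[of e] by (simp add: eqC teqD)
    thus "tev \<phi> (la2 e (X @ tscale (-1) Y)) = tev \<phi> []"
      by (simp add: la2_append la2_tscale tev_tscale \<open>bilin \<phi>\<close>)
  qed
  thus ?thesis unfolding eqC by (rule teq_diff_nil)
qed


section \<open>Delta_B and Delta_C as linear maps\<close>

lemma tevB: "eq_BAB H X Y \<Longrightarrow> bilin \<phi> \<Longrightarrow> PB \<phi> \<Longrightarrow> tev \<phi> X = tev \<phi> Y"
  by (simp add: eqB teqD)
lemma tevC: "eq_CAC H X Y \<Longrightarrow> bilin \<phi> \<Longrightarrow> PC \<phi> \<Longrightarrow> tev \<phi> X = tev \<phi> Y"
  by (simp add: eqC teqD)

lemma eqB_sym: "eq_BAB H X Y \<Longrightarrow> eq_BAB H Y X" by (simp add: eqB teq_sym)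
lemma eqB_trans[trans]: "eq_BAB H X Y \<Longrightarrow> eq_BAB H Y Z \<Longrightarrow> eq_BAB H X Z" unfolding eqB by (rule teq_trans)
lemma eqC_sym: "eq_CAC H X Y \<Longrightarrow> eq_CAC H Y X" by (simp add: eqC teq_sym)
lemma eqC_trans[trans]: "eq_CAC H X Y \<Longrightarrow> eq_CAC H Y Z \<Longrightarrow> eq_CAC H X Z" unfolding eqC by (rule teq_trans)
lemma eqB_refl: "X = Y \<Longrightarrow> eq_BAB H X Y" by (simp add: eqB teq_refl)
lemma eqC_refl: "X = Y \<Longrightarrow> eq_CAC H X Y" by (simp add: eqC teq_refl)

lemma DB_resp: "eq_BAB H xs ys \<Longrightarrow> eq_BAB H (DB H a xs) (DB H a ys)" by (rule DBax[THEN spec, THEN conjunct1, rule_format])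
lemma DB_app: "eq_BAB H (DB H a (xs @ ys)) (DB H a xs @ DB H a ys)" by (rule DBax[THEN spec, THEN conjunct2, THEN conjunct1, rule_format])
lemma DB_tsc: "eq_BAB H (DB H a (tscale c xs)) (tscale c (DB H a xs))" by (rule DBax[THEN spec, THEN conjunct2, THEN conjunct2, THEN conjunct1, rule_format])
lemma DC_resp: "eq_CAC H xs ys \<Longrightarrow> eq_CAC H (DC H a xs) (DC H a ys)" by (rule DCax[THEN spec, THEN conjunct1, rule_format])
lemma DC_app: "eq_CAC H (DC H a (xs @ ys)) (DC H a xs @ DC H a ys)" by (rule DCax[THEN spec, THEN conjunct2, THEN conjunct1, rule_format])
lemma DC_tsc: "eq_CAC H (DC H a (tscale c xs)) (tscale c (DC H a xs))" by (rule DCax[THEN spec, THEN conjunct2, THEN conjunct2, THEN conjunct1, rule_format])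

definition "wB a \<phi> u v = tev \<phi> (DB H a [(u, v)])"
definition "wC a \<phi> u v = tev \<phi> (DC H a [(u, v)])"

lemma DB_nil: assumes "bilin \<phi>" "PB \<phi>" shows "tev \<phi> (DB H a []) = 0"
proof -
  have "tev \<phi> (DB H a ([] @ [])) = tev \<phi> (DB H a [] @ DB H a [])" using DB_app assms by (rule tevB)
  thus ?thesis by simp
qed
lemma DC_nil: assumes "bilin \<phi>" "PC \<phi>" shows "tev \<phi> (DC H a []) = 0"
proof -
  have "tev \<phi> (DC H a ([] @ [])) = tev \<phi> (DC H a [] @ DC H a [])" using DC_app assms by (rule tevC)
  thus ?thesis by simp
qed

lemma DB_tev: assumes "bilin \<phi>" "PB \<phi>" shows "tev \<phi> (DB H a xs) = tev (wB a \<phi>) xs"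
proof (induct xs)
  case Nil thus ?case using DB_nil assms by simp
next
  case (Cons p xs)
  obtain u v where p: "p = (u, v)" by (cases p)
  have "tev \<phi> (DB H a ([(u,v)] @ xs)) = tev \<phi> (DB H a [(u,v)] @ DB H a xs)" using DB_app assms by (rule tevB)
  thus ?case using Cons p by (simp add: wB_def)
qed
lemma DC_tev: assumes "bilin \<phi>" "PC \<phi>" shows "tev \<phi> (DC H a xs) = tev (wC a \<phi>) xs"
proof (induct xs)
  case Nil thus ?case using DC_nil assms by simp
next
  case (Cons p xs)
  obtain u v where p: "p = (u, v)" by (cases p)
  have "tev \<phi> (DC H a ([(u,v)] @ xs)) = tev \<phi> (DC H a [(u,v)] @ DC H a xs)" using DC_app assms by (rule tevC)
  thus ?case using Cons p by (simp add: wC_def)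
qed

lemma wB_ok: assumes b: "bilin \<phi>" and p: "PB \<phi>" shows "bilin (wB a \<phi>)" "PB (wB a \<phi>)"
proof -
  have r: "\<And>X Y. eq_BAB H X Y \<Longrightarrow> tev \<phi> (DB H a X) = tev \<phi> (DB H a Y)"
    using DB_resp b p by (rule tevB)
  show "bilin (wB a \<phi>)"
  proof (rule bilinI)
    fix u u' v show "wB a \<phi> (u + u') v = wB a \<phi> u v + wB a \<phi> u' v"
      using r[OF teq_add_l[where P=PB, folded eqB]] tevB[OF DB_app[of a "[(u,v)]" "[(u',v)]"] b p] by (simp add: wB_def)
  next
    fix u v v' show "wB a \<phi> u (v + v') = wB a \<phi> u v + wB a \<phi> u v'"
      using r[OF teq_add_r[where P=PB, folded eqB]] tevB[OF DB_app[of a "[(u,v)]" "[(u,v')]"] b p] by (simp add: wB_def)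
  next
    fix c u v show "wB a \<phi> (cscale c u) v = c * wB a \<phi> u v"
      using r[OF teq_sc_l[where P=PB, folded eqB]] tevB[OF DB_tsc b p] by (simp add: wB_def tev_tscale b)
  next
    fix c u v show "wB a \<phi> u (cscale c v) = c * wB a \<phi> u v"
      using r[OF teq_sc_r[where P=PB, folded eqB]] tevB[OF DB_tsc b p] by (simp add: wB_def tev_tscale b)
  qed
  show "PB (wB a \<phi>)" unfolding PB_def
  proof (intro ballI allI)
    fix x u v assume x: "x \<in> Bs H"
    have "eq_BAB H [(lact x u, v)] [(u, lact (SB H x) v)]"
      unfolding eqB by (rule teqI) (simp add: PBD x)
    thus "wB a \<phi> (lact x u) v = wB a \<phi> u (lact (SB H x) v)" using r by (simp add: wB_def)
  qed
qed

lemma wC_ok: assumes b: "bilin \<phi>" and p: "PC \<phi>" shows "bilin (wC a \<phi>)" "PC (wC a \<phi>)"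
proof -
  have r: "\<And>X Y. eq_CAC H X Y \<Longrightarrow> tev \<phi> (DC H a X) = tev \<phi> (DC H a Y)"
    using DC_resp b p by (rule tevC)
  show "bilin (wC a \<phi>)"
  proof (rule bilinI)
    fix u u' v show "wC a \<phi> (u + u') v = wC a \<phi> u v + wC a \<phi> u' v"
      using r[OF teq_add_l[where P=PC, folded eqC]] tevC[OF DC_app[of a "[(u,v)]" "[(u',v)]"] b p] by (simp add: wC_def)
  next
    fix u v v' show "wC a \<phi> u (v + v') = wC a \<phi> u v + wC a \<phi> u v'"
      using r[OF teq_add_r[where P=PC, folded eqC]] tevC[OF DC_app[of a "[(u,v)]" "[(u,v')]"] b p] by (simp add: wC_def)
  next
    fix c u v show "wC a \<phi> (cscale c u) v = c * wC a \<phi> u v"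
      using r[OF teq_sc_l[where P=PC, folded eqC]] tevC[OF DC_tsc b p] by (simp add: wC_def tev_tscale b)
  next
    fix c u v show "wC a \<phi> u (cscale c v) = c * wC a \<phi> u v"
      using r[OF teq_sc_r[where P=PC, folded eqC]] tevC[OF DC_tsc b p] by (simp add: wC_def tev_tscale b)
  qed
  show "PC (wC a \<phi>)" unfolding PC_def
  proof (intro ballI allI)
    fix y u v assume y: "y \<in> Cs H"
    have "eq_CAC H [(ract u (SC H y), v)] [(u, ract v y)]"
      unfolding eqC by (rule teqI) (simp add: PCD y)
    thus "wC a \<phi> (ract u (SC H y)) v = wC a \<phi> u (ract v y)" using r by (simp add: wC_def)
  qed
qed

lemma DB_mul_tev: assumes "bilin \<phi>" "PB \<phi>" shows "tev \<phi> (DB H (a * a') xs) = tev (wB a \<phi>) (DB H a' xs)"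
proof -
  have "tev \<phi> (DB H (a * a') xs) = tev \<phi> (DB H a (DB H a' xs))" using DBmul[rule_format] assms by (rule tevB)
  thus ?thesis using DB_tev assms by simp
qed
lemma DC_mul_tev: assumes "bilin \<phi>" "PC \<phi>" shows "tev \<phi> (DC H (a * a') xs) = tev (wC a' \<phi>) (DC H a xs)"
proof -
  have "tev \<phi> (DC H (a * a') xs) = tev \<phi> (DC H a' (DC H a xs))" using DCmul[rule_format] assms by (rule tevC)
  thus ?thesis using DC_tev assms by simp
qed

lemma DBl_char: "eq_BAB H (DB H b [(a, c)]) (ta2 (DBl H b a) c)"
proof -
  have "\<exists>t. \<forall>c. eq_BAB H (DB H b [(a, c)]) (ta2 t c)" by (rule DBax[THEN spec, THEN conjunct2, THEN conjunct2, THEN conjunct2, THEN conjunct1, rule_format])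
  hence "\<forall>c. eq_BAB H (DB H b [(a, c)]) (ta2 (DBl H b a) c)" unfolding DBl_def by (rule someI_ex)
  thus ?thesis by blast
qed
lemma DBr_char: "eq_BAB H (DB H a [(c, b)]) (ta1 (DBr H a b) c)"
proof -
  have "\<exists>t. \<forall>c. eq_BAB H (DB H a [(c, b)]) (ta1 t c)" by (rule DBax[THEN spec, THEN conjunct2, THEN conjunct2, THEN conjunct2, THEN conjunct2, rule_format])
  hence "\<forall>c. eq_BAB H (DB H a [(c, b)]) (ta1 (DBr H a b) c)" unfolding DBr_def by (rule someI_ex)
  thus ?thesis by blast
qed
lemma DCl_char: "eq_CAC H (DC H b [(a, c)]) (la2 c (DCl H b a))"
proof -
  have "\<exists>t. \<forall>c. eq_CAC H (DC H b [(a, c)]) (la2 c t)" by (rule DCax[THEN spec, THEN conjunct2, THEN conjunct2, THEN conjunct2, THEN conjunct1, rule_format])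
  hence "\<forall>c. eq_CAC H (DC H b [(a, c)]) (la2 c (DCl H b a))" unfolding DCl_def by (rule someI_ex)
  thus ?thesis by blast
qed
lemma DCr_char: "eq_CAC H (DC H b [(a, c)]) (la1 a (DCr H b c))"
proof -
  have "\<exists>t. \<forall>a. eq_CAC H (DC H b [(a, c)]) (la1 a t)" by (rule DCax[THEN spec, THEN conjunct2, THEN conjunct2, THEN conjunct2, THEN conjunct2, rule_format])
  hence "\<forall>a. eq_CAC H (DC H b [(a, c)]) (la1 a (DCr H b c))" unfolding DCr_def by (rule someI_ex)
  thus ?thesis by blast
qed

lemma T_rho1[simp]: "T_rho H [(a, b)] = DBr H a b" by (simp add: T_rho_def)
lemma T_lambda1[simp]: "T_lambda H [(a, b)] = DBl H b a" by (simp add: T_lambda_def)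
lemma lambda_T1[simp]: "lambda_T H [(a, b)] = DCl H b a" by (simp add: lambda_T_def)
lemma rho_T1[simp]: "rho_T H [(a, b)] = DCr H a b" by (simp add: rho_T_def)

lemma ta2_DBr: "eq_BAB H (ta2 (DBr H p v) k) (DBr H p (v * k))"
proof (rule ndB1)
  fix u
  have "ta1 (ta2 (DBr H p v) k) u = ta2 (ta1 (DBr H p v) u) k" by (rule ta1_ta2)
  also have "eq_BAB H \<dots> (ta2 (DB H p [(u, v)]) k)" by (rule ta2_resp, rule eqB_sym, rule DBr_char)
  also have "eq_BAB H \<dots> (ta2 (ta2 (DBl H p u) v) k)" by (rule ta2_resp, rule DBl_char)
  also have "\<dots> = ta2 (DBl H p u) (v * k)" by (rule ta2_ta2)
  also have "eq_BAB H \<dots> (DB H p [(u, v * k)])" by (rule eqB_sym, rule DBl_char)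
  also have "eq_BAB H \<dots> (ta1 (DBr H p (v * k)) u)" by (rule DBr_char)
  finally show "eq_BAB H (ta1 (ta2 (DBr H p v) k) u) (ta1 (DBr H p (v * k)) u)" .
qed

lemma DBr_ract: assumes x: "x \<in> Bs H" shows "eq_BAB H (DBr H (ract p x) z) (DBr H p (lact x z))"
proof -
  have "eq_ABBA H [(ract p x, z)] [(p, lact x z)]"
    unfolding eqABBA by (rule teqI) (simp add: PABBA_def x)
  hence "eq_BAB H (T_rho H [(ract p x, z)]) (T_rho H [(p, lact x z)])" using qTr unfolding qbij_def by blast
  thus ?thesis by simp
qed

lemma DB_ract: assumes x: "x \<in> Bs H" shows "eq_BAB H (DB H (ract p x) [(e, z)]) (DB H p [(e, lact x z)])"
proof -
  have "eq_BAB H (DB H (ract p x) [(e, z)]) (ta1 (DBr H (ract p x) z) e)" by (rule DBr_char)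
  also have "eq_BAB H \<dots> (ta1 (DBr H p (lact x z)) e)" by (rule ta1_resp, rule DBr_ract[OF x])
  also have "eq_BAB H \<dots> (DB H p [(e, lact x z)])" by (rule eqB_sym, rule DBr_char)
  finally show ?thesis .
qed

lemma la2_DCr: "eq_CAC H (la2 d (DCr H a b)) (DCr H a (d * b))"
proof (rule ndC1)
  fix z
  have "la1 z (la2 d (DCr H a b)) = la2 d (la1 z (DCr H a b))" by (rule la1_la2)
  also have "eq_CAC H \<dots> (la2 d (DC H a [(z, b)]))" by (rule la2_resp, rule eqC_sym, rule DCr_char)
  also have "eq_CAC H \<dots> (la2 d (la2 b (DCl H a z)))" by (rule la2_resp, rule DCl_char)
  also have "\<dots> = la2 (d * b) (DCl H a z)" by (rule la2_la2)
  also have "eq_CAC H \<dots> (DC H a [(z, d * b)])" by (rule eqC_sym, rule DCl_char)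
  also have "eq_CAC H \<dots> (la1 z (DCr H a (d * b)))" by (rule DCr_char)
  finally show "eq_CAC H (la1 z (la2 d (DCr H a b))) (la1 z (DCr H a (d * b)))" .
qed

lemma DCl_lact: assumes y: "y \<in> Cs H" shows "eq_CAC H (DCl H (lact y b) a) (DCl H b (ract a y))"
proof -
  have "eq_ACCA H [(ract a y, b)] [(a, lact y b)]"
    unfolding eqACCA by (rule teqI) (simp add: PACCA_def y)
  hence "eq_CAC H (lambda_T H [(ract a y, b)]) (lambda_T H [(a, lact y b)])" using qlT unfolding qbij_def by blast
  thus ?thesis by (simp add: eqC_sym)
qed

lemma la1_DCr_lact: assumes y: "y \<in> Cs H"
  shows "eq_CAC H (la1 z (DCr H (lact y v) c)) (la1 (ract z y) (DCr H v c))"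
proof -
  have "eq_CAC H (la1 z (DCr H (lact y v) c)) (DC H (lact y v) [(z, c)])" by (rule eqC_sym, rule DCr_char)
  also have "eq_CAC H \<dots> (la2 c (DCl H (lact y v) z))" by (rule DCl_char)
  also have "eq_CAC H \<dots> (la2 c (DCl H v (ract z y)))" by (rule la2_resp, rule DCl_lact[OF y])
  also have "eq_CAC H \<dots> (DC H v [(ract z y, c)])" by (rule eqC_sym, rule DCl_char)
  also have "eq_CAC H \<dots> (la1 (ract z y) (DCr H v c))" by (rule DCr_char)
  finally show ?thesis .
qed

lemma la1_DCr_mult: "eq_CAC H (la1 z (DCr H (v * b) c)) (DC H b (la1 z (DCr H v c)))"
proof -
  have "eq_CAC H (la1 z (DCr H (v * b) c)) (DC H (v * b) [(z, c)])" by (rule eqC_sym, rule DCr_char)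
  also have "eq_CAC H \<dots> (DC H b (DC H v [(z, c)]))" by (rule DCmul[rule_format])
  also have "eq_CAC H \<dots> (DC H b (la1 z (DCr H v c)))" by (rule DC_resp, rule DCr_char)
  finally show ?thesis .
qed

end


definition spanset :: "'a::ab_group_add set \<Rightarrow> 'a set" where
  "spanset T = {sum_list L | L. set L \<subseteq> T}"

lemma spanset_0: "0 \<in> spanset T" unfolding spanset_def by (rule CollectI, rule exI[of _ "[]"]) simp
lemma spanset_add: "a \<in> spanset T \<Longrightarrow> b \<in> spanset T \<Longrightarrow> a + b \<in> spanset T"
proof -
  assume "a \<in> spanset T" "b \<in> spanset T"
  then obtain L M where "set L \<subseteq> T" "a = sum_list L" "set M \<subseteq> T" "b = sum_list M" unfolding spanset_def by blast
  hence "set (L @ M) \<subseteq> T" "a + b = sum_list (L @ M)" by auto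
  thus ?thesis unfolding spanset_def by blast
qed
lemma spanset_mem: "t \<in> T \<Longrightarrow> t \<in> spanset T"
  unfolding spanset_def by (rule CollectI, rule exI[of _ "[t]"]) simp
lemma spanset_sum: "set L \<subseteq> spanset T \<Longrightarrow> sum_list L \<in> spanset T"
  by (induct L) (simp_all add: spanset_0 spanset_add)
lemma spanset_induct:
  assumes "a \<in> spanset T" "\<And>t. t \<in> T \<Longrightarrow> Q t" "Q 0" "\<And>a b. Q a \<Longrightarrow> Q b \<Longrightarrow> Q (a + b)"
  shows "Q a"
proof -
  obtain L where L: "set L \<subseteq> T" "a = sum_list L" using assms(1) unfolding spanset_def by blast
  have "Q (sum_list L)" using L(1) by (induct L) (auto intro: assms(2-4))
  thus ?thesis using L by simp
qed

lemma span_comp: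
  assumes sp: "\<And>a. a \<in> spanset {g m b | m b. m \<in> X}"
    and inner: "\<And>b. b \<in> spanset T"
    and add: "\<And>m x y. m \<in> X \<Longrightarrow> g m (x + y) = g m x + g m y" "\<And>m. m \<in> X \<Longrightarrow> g m 0 = 0"
  shows "a \<in> spanset {g m t | m t. m \<in> X \<and> t \<in> T}"
proof -
  let ?T' = "{g m t | m t. m \<in> X \<and> t \<in> T}"
  have gm: "g m b \<in> spanset ?T'" if m: "m \<in> X" for m b
  proof -
    have "b \<in> spanset T" by (rule inner)
    thus ?thesis
    proof (rule spanset_induct[where Q="\<lambda>b. g m b \<in> spanset ?T'"])
      fix t assume "t \<in> T" thus "g m t \<in> spanset ?T'" using m by (auto intro: spanset_mem)
    next show "g m 0 \<in> spanset ?T'" using add(2)[OF m] spanset_0 by simp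
    next fix a b assume "g m a \<in> spanset ?T'" "g m b \<in> spanset ?T'"
      thus "g m (a + b) \<in> spanset ?T'" using add(1)[OF m] spanset_add by simp
    qed
  qed
  have "a \<in> spanset {g m b | m b. m \<in> X}" by (rule sp)
  thus ?thesis
    by (rule spanset_induct[where Q="\<lambda>a. a \<in> spanset ?T'"]) (auto intro: gm spanset_0 spanset_add)
qed

context rmha begin

lemma rspans_span: "rspans X \<Longrightarrow> a \<in> spanset {ract b m | m b. m \<in> X}"
proof -
  assume "rspans X"
  then obtain l where l: "set (map fst l) \<subseteq> X" "a = sum_list (map (\<lambda>(m, b). ract b m) l)"
    unfolding rspans_def by blast
  have "set (map (\<lambda>(m, b). ract b m) l) \<subseteq> {ract b m | m b. m \<in> X}" using l(1) by force
  thus ?thesis unfolding spanset_def l(2) by blast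
qed
lemma lspans_span: "lspans X \<Longrightarrow> a \<in> spanset {lact m b | m b. m \<in> X}"
proof -
  assume "lspans X"
  then obtain l where l: "set (map fst l) \<subseteq> X" "a = sum_list (map (\<lambda>(m, b). lact m b) l)"
    unfolding lspans_def by blast
  have "set (map (\<lambda>(m, b). lact m b) l) \<subseteq> {lact m b | m b. m \<in> X}" using l(1) by force
  thus ?thesis unfolding spanset_def l(2) by blast
qed

definition "T1 = {ract e x' | x' e. x' \<in> Bs H}"
definition "T2 = {ract t y' | y' t. y' \<in> Cs H \<and> t \<in> T1}"
definition "T3 = {lact y t | y t. y \<in> Cs H \<and> t \<in> T2}"
definition "T4 = {lact x t | x t. x \<in> Bs H \<and> t \<in> T3}"

lemma span1: "a \<in> spanset T1" unfolding T1_def using rspans_span[OF spB'] by simp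
lemma span2: "a \<in> spanset T2" unfolding T2_def
  by (rule span_comp[where g="\<lambda>m b. ract b m"], rule rspans_span[OF spC], rule span1)
     (simp_all add: ract_add ract_zero CsM)
lemma span3: "a \<in> spanset T3" unfolding T3_def
  by (rule span_comp[where g="\<lambda>m b. lact m b"], rule lspans_span[OF spC'], rule span2)
     (simp_all add: lact_add lact_zero CsM)
lemma span4: "a \<in> spanset T4" unfolding T4_def
  by (rule span_comp[where g="\<lambda>m b. lact m b"], rule lspans_span[OF spB], rule span3)
     (simp_all add: lact_add lact_zero BsM)

lemma T4_form: "t \<in> T4 \<Longrightarrow> \<exists>x y e x' y'. x \<in> Bs H \<and> y \<in> Cs H \<and> x' \<in> Bs H \<and> y' \<in> Cs H \<and> t = xyaxy x y e x' y'"
proof -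
  assume "t \<in> T4"
  then obtain x y y' x' e where h: "x \<in> Bs H" "y \<in> Cs H" "y' \<in> Cs H" "x' \<in> Bs H"
    "t = lact x (lact y (ract (ract e x') y'))"
    unfolding T4_def T3_def T2_def T1_def by blast
  have "lact y (ract (ract e x') y') = ract (ract (lact y e) x') y'"
    using h by (simp add: lact_ract BsM CsM)
  hence "t = ract (ract (lact x (lact y e)) x') y'"
    using h by (simp add: lact_ract BsM CsM)
  thus ?thesis using h unfolding xyaxy_def by blast
qed

lemma S_lactB: assumes x0: "x0 \<in> Bs H" shows "S (lact x0 a) = ract (S a) (SB H x0)"
proof -
  have "a \<in> spanset T4" by (rule span4)
  thus ?thesis
  proof (rule spanset_induct[where Q="\<lambda>a. S (lact x0 a) = ract (S a) (SB H x0)"])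
    fix t assume "t \<in> T4"
    then obtain x y e x' y' where h: "x \<in> Bs H" "y \<in> Cs H" "x' \<in> Bs H" "y' \<in> Cs H" "t = xyaxy x y e x' y'"
      using T4_form by blast
    have m: "mmul x0 x \<in> Bs H" using x0 h by (simp add: Bs_mmul)
    have "lact x0 t = xyaxy (mmul x0 x) y e x' y'"
      using h x0 by (simp add: xyaxy_def lact_ract lact_mmul BsM CsM)
    hence "S (lact x0 t) = lact (SC H y') (lact (SB H x') (ract (ract (S e) (SC H y)) (SB H (mmul x0 x))))"
      using Sxy m h by simp
    also have "\<dots> = lact (SC H y') (lact (SB H x') (ract (ract (ract (S e) (SC H y)) (SB H x)) (SB H x0)))"
      by (simp add: SB_mmul x0 h ract_mmul)
    also have "\<dots> = ract (lact (SC H y') (lact (SB H x') (ract (ract (S e) (SC H y)) (SB H x)))) (SB H x0)"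
      by (simp add: lact_ract BsM CsM SB_in SC_in h x0)
    also have "\<dots> = ract (S t) (SB H x0)" using Sxy h by simp
    finally show "S (lact x0 t) = ract (S t) (SB H x0)" .
  next
    show "S (lact x0 0) = ract (S 0) (SB H x0)" by (simp add: lact_zero ract_zero S_zero BsM CsM SB_in x0)
  next
    fix a b assume "S (lact x0 a) = ract (S a) (SB H x0)" "S (lact x0 b) = ract (S b) (SB H x0)"
    thus "S (lact x0 (a + b)) = ract (S (a + b)) (SB H x0)"
      by (simp add: lact_add ract_add S_add BsM CsM SB_in x0)
  qed
qed

lemma S_ractC: assumes y0: "y0 \<in> Cs H" shows "S (ract a y0) = lact (SC H y0) (S a)"
proof -
  have "a \<in> spanset T4" by (rule span4)
  thus ?thesis
  proof (rule spanset_induct[where Q="\<lambda>a. S (ract a y0) = lact (SC H y0) (S a)"])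
    fix t assume "t \<in> T4"
    then obtain x y e x' y' where h: "x \<in> Bs H" "y \<in> Cs H" "x' \<in> Bs H" "y' \<in> Cs H" "t = xyaxy x y e x' y'"
      using T4_form by blast
    have m: "mmul y' y0 \<in> Cs H" using y0 h by (simp add: Cs_mmul)
    have "ract t y0 = xyaxy x y e x' (mmul y' y0)"
      using h by (simp add: xyaxy_def ract_mmul)
    hence "S (ract t y0) = lact (SC H (mmul y' y0)) (lact (SB H x') (ract (ract (S e) (SC H y)) (SB H x)))"
      using Sxy m h by simp
    also have "\<dots> = lact (SC H y0) (lact (SC H y') (lact (SB H x') (ract (ract (S e) (SC H y)) (SB H x))))"
      by (simp add: SC_mmul y0 h lact_mmul)
    also have "\<dots> = lact (SC H y0) (S t)" using Sxy h by simp
    finally show "S (ract t y0) = lact (SC H y0) (S t)" .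
  next
    show "S (ract 0 y0) = lact (SC H y0) (S 0)" by (simp add: lact_zero ract_zero S_zero BsM CsM SC_in y0)
  next
    fix a b assume "S (ract a y0) = lact (SC H y0) (S a)" "S (ract b y0) = lact (SC H y0) (S b)"
    thus "S (ract (a + b) y0) = lact (SC H y0) (S (a + b))"
      by (simp add: lact_add ract_add S_add BsM CsM SC_in y0)
  qed
qed

section \<open>Invariance of A-valued contractions\<close>

lemma sum_ta1: "sum_list (map (\<lambda>(u,v). g u v) (ta1 L d)) = sum_list (map (\<lambda>(u,v). g (u * d) v) L)"
  by (induct L) (auto simp: ta1_def)
lemma sum_ta2: "sum_list (map (\<lambda>(u,v). g u v) (ta2 L d)) = sum_list (map (\<lambda>(u,v). g u (v * d)) L)"
  by (induct L) (auto simp: ta2_def)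
lemma sum_la1: "sum_list (map (\<lambda>(u,v). g u v) (la1 d L)) = sum_list (map (\<lambda>(u,v). g (d * u) v) L)"
  by (induct L) (auto simp: la1_def)
lemma sum_la2: "sum_list (map (\<lambda>(u,v). g u v) (la2 d L)) = sum_list (map (\<lambda>(u,v). g u (d * v)) L)"
  by (induct L) (auto simp: la2_def)
lemma sum_mult_right2: "sum_list (map (\<lambda>(u,v). g u v) L) * (k::'a) = sum_list (map (\<lambda>(u,v). g u v * k) L)"
  by (induct L) (auto simp: distrib_right)
lemma sum_mult_left2: "(k::'a) * sum_list (map (\<lambda>(u,v). g u v) L) = sum_list (map (\<lambda>(u,v). k * g u v) L)"
  by (induct L) (auto simp: distrib_left)


lemma sum_list_append2: "sum_list (map (\<lambda>(c,d). g c d) (xs @ ys)) = sum_list (map (\<lambda>(c,d). g c d) xs) + sum_list (map (\<lambda>(c,d). g c d) ys)"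
  by simp

lemma inv_gen:
  fixes f :: "'a tens \<Rightarrow> 'a tens" and g :: "'a \<Rightarrow> 'a \<Rightarrow> 'a"
  assumes fsurj: "\<And>ys. \<exists>xs. teq P (f xs) ys"
    and fconcat: "\<And>xs. f xs = concat (map (\<lambda>(a,b). f [(a,b)]) xs)"
    and hyp: "\<And>a b xs. teq P xs (f [(a,b)]) \<Longrightarrow> sum_list (map (\<lambda>(c,d). g c d) xs) = h a b"
    and neg: "\<And>c d. g (cscale (-1) c) d = - g c d"
    and e: "teq P ys1 ys2"
  shows "sum_list (map (\<lambda>(c,d). g c d) ys1) = sum_list (map (\<lambda>(c,d). g c d) ys2)"
proof -
  define G where "G ys = sum_list (map (\<lambda>(c,d). g c d) ys)" for ys
  have Gapp: "G (xs @ ys) = G xs + G ys" for xs ys by (simp add: G_def)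
  have Gneg: "G (tscale (-1) L) = - G L" for L
    by (induct L) (auto simp: G_def tscale_def neg)
  have main: "\<forall>ys. teq P (f xs) ys \<longrightarrow> G ys = sum_list (map (\<lambda>(a,b). h a b) xs)" for xs
  proof (induct xs)
    case Nil
    show ?case
    proof (intro allI impI)
      fix ys assume "teq P (f []) ys"
      hence z: "teq P [] ys" using fconcat[of "[]"] by simp
      let ?Z = "f [(0,0)]"
      have "teq P (ys @ ?Z) ?Z" using z by (auto simp: teq_def)
      hence "G (ys @ ?Z) = h 0 0" unfolding G_def by (rule hyp)
      moreover have "G ?Z = h 0 0" unfolding G_def by (rule hyp) (rule teq_refl)
      ultimately show "G ys = sum_list (map (\<lambda>(a,b). h a b) [])" by (simp add: Gapp)
    qed
  next
    case (Cons p xs)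
    obtain a b where p: "p = (a,b)" by (cases p)
    show ?case
    proof (intro allI impI)
      fix ys assume h1: "teq P (f (p # xs)) ys"
      have fc: "f (p # xs) = f [(a,b)] @ f xs" using fconcat[of "p # xs"] fconcat[of xs] p by simp
      have "teq P (f xs) (ys @ tscale (-1) (f [(a,b)]))"
      proof (rule teqI)
        fix \<phi> assume "bilin \<phi>" "P \<phi>"
        hence "tev \<phi> (f [(a,b)]) + tev \<phi> (f xs) = tev \<phi> ys" using h1 fc by (simp add: teq_def)
        hence "tev \<phi> (f xs) = tev \<phi> ys - tev \<phi> (f [(a,b)])" by (metis add_diff_cancel_left')
        thus "tev \<phi> (f xs) = tev \<phi> (ys @ tscale (-1) (f [(a,b)]))" by (simp add: tev_tscale \<open>bilin \<phi>\<close>)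
      qed
      hence "G (ys @ tscale (-1) (f [(a,b)])) = sum_list (map (\<lambda>(a,b). h a b) xs)" using Cons by blast
      moreover have "G (f [(a,b)]) = h a b" unfolding G_def by (rule hyp) (rule teq_refl)
      ultimately have "G ys - h a b = sum_list (map (\<lambda>(a,b). h a b) xs)" by (simp add: Gapp Gneg)
      thus "G ys = sum_list (map (\<lambda>(a,b). h a b) (p # xs))" using p by (simp add: diff_eq_eq add.commute)
    qed
  qed
  obtain xs where xs: "teq P (f xs) ys1" using fsurj by blast
  hence "teq P (f xs) ys2" using e by (rule teq_trans)
  with xs main show ?thesis unfolding G_def by metis
qed

lemma T_rho_concat: "T_rho H xs = concat (map (\<lambda>(a,b). T_rho H [(a,b)]) xs)"
  by (simp add: T_rho_def)
lemma lambda_T_concat: "lambda_T H xs = concat (map (\<lambda>(a,b). lambda_T H [(a,b)]) xs)"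
  by (simp add: lambda_T_def)

lemma invR: assumes "eq_BAB H ys1 ys2"
  shows "sum_list (map (\<lambda>(c,d). S c * d) ys1) = sum_list (map (\<lambda>(c,d). S c * d) ys2)"
proof (rule inv_gen[where P=PB and f="T_rho H" and h="\<lambda>a b. lact (SC H (eC a)) b"])
  show "\<And>ys. \<exists>xs. teq PB (T_rho H xs) ys" using qTr unfolding qbij_def eqB by blast
  show "\<And>xs. T_rho H xs = concat (map (\<lambda>(a,b). T_rho H [(a,b)]) xs)" by (rule T_rho_concat)
  show "\<And>a b xs. teq PB xs (T_rho H [(a,b)]) \<Longrightarrow> sum_list (map (\<lambda>(c,d). S c * d) xs) = lact (SC H (eC a)) b"
    using antiR unfolding eqB by blast
  show "\<And>c d. S (cscale (-1) c) * d = - (S c * d)" by (simp add: S_sc cscale_neg1[of "S _"])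
  show "teq PB ys1 ys2" using assms by (simp add: eqB)
qed

lemma invL: assumes "eq_CAC H ys1 ys2"
  shows "sum_list (map (\<lambda>(c,d). c * S d) ys1) = sum_list (map (\<lambda>(c,d). c * S d) ys2)"
proof (rule inv_gen[where P=PC and f="lambda_T H" and h="\<lambda>a b. ract a (SB H (eB b))"])
  show "\<And>ys. \<exists>xs. teq PC (lambda_T H xs) ys" using qlT unfolding qbij_def eqC by blast
  show "\<And>xs. lambda_T H xs = concat (map (\<lambda>(a,b). lambda_T H [(a,b)]) xs)" by (rule lambda_T_concat)
  show "\<And>a b xs. teq PC xs (lambda_T H [(a,b)]) \<Longrightarrow> sum_list (map (\<lambda>(c,d). c * S d) xs) = ract a (SB H (eB b))"
    using antiL unfolding eqC by blast
  show "\<And>c d. cscale (-1) c * S d = - (c * S d)" by (simp add: cscale_neg1)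
  show "teq PC ys1 ys2" using assms by (simp add: eqC)
qed

lemma eB_in: "eB a \<in> Bs H" using lc by (simp add: left_counit_def)
lemma eC_in: "eC a \<in> Cs H" using rc by (simp add: right_counit_def)
lemma LC2: "eq_BAB H xs (T_lambda H [(a, b)]) \<Longrightarrow> sum_list (map (\<lambda>(c, d). lact (eB d) c) xs) = b * a"
  using lc unfolding left_counit_def by blast
lemma RC1: "eq_CAC H xs (rho_T H [(a, b)]) \<Longrightarrow> sum_list (map (\<lambda>(c, d). ract d (eC c)) xs) = b * a"
  using rc unfolding right_counit_def by blast

lemma LemA: "sum_list (map (\<lambda>(u,v). S u * v) (DBl H p e)) = ract (S e) (SC H (eC p))"
proof (rule eq_by_right)
  fix d
  have "sum_list (map (\<lambda>(u,v). S u * v) (DBl H p e)) * d = sum_list (map (\<lambda>(u,v). S u * v) (ta2 (DBl H p e) d))"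
    by (simp add: sum_mult_right2 sum_ta2 mult.assoc)
  also have "\<dots> = sum_list (map (\<lambda>(u,v). S u * v) (ta1 (DBr H p d) e))"
  proof (rule invR)
    have "eq_BAB H (ta2 (DBl H p e) d) (DB H p [(e, d)])" by (rule eqB_sym, rule DBl_char)
    also have "eq_BAB H \<dots> (ta1 (DBr H p d) e)" by (rule DBr_char)
    finally show "eq_BAB H (ta2 (DBl H p e) d) (ta1 (DBr H p d) e)" .
  qed
  also have "\<dots> = S e * sum_list (map (\<lambda>(u,v). S u * v) (DBr H p d))"
    by (simp add: sum_mult_left2 sum_ta1 S_mult mult.assoc)
  also have "\<dots> = S e * lact (SC H (eC p)) d" using antiR[rule_format, of "DBr H p d" p d] by (simp add: eqB teq_refl)
  also have "\<dots> = ract (S e) (SC H (eC p)) * d" by (simp add: mult_lact BsM SC_in eC_in)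
  finally show "sum_list (map (\<lambda>(u,v). S u * v) (DBl H p e)) * d = ract (S e) (SC H (eC p)) * d" .
qed

lemma LemB: "sum_list (map (\<lambda>(v,w). v * S w) (DCr H s c)) = lact (SB H (eB s)) (S c)"
proof (rule eq_by_left)
  fix h
  have "h * sum_list (map (\<lambda>(v,w). v * S w) (DCr H s c)) = sum_list (map (\<lambda>(v,w). v * S w) (la1 h (DCr H s c)))"
    by (simp add: sum_mult_left2 sum_la1 mult.assoc)
  also have "\<dots> = sum_list (map (\<lambda>(v,w). v * S w) (la2 c (DCl H s h)))"
  proof (rule invL)
    have "eq_CAC H (la1 h (DCr H s c)) (DC H s [(h, c)])" by (rule eqC_sym, rule DCr_char)
    also have "eq_CAC H \<dots> (la2 c (DCl H s h))" by (rule DCl_char)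
    finally show "eq_CAC H (la1 h (DCr H s c)) (la2 c (DCl H s h))" .
  qed
  also have "\<dots> = sum_list (map (\<lambda>(v,w). v * S w) (DCl H s h)) * S c"
    by (simp add: sum_mult_right2 sum_la2 S_mult mult.assoc)
  also have "\<dots> = ract h (SB H (eB s)) * S c" using antiL[rule_format, of "DCl H s h" h s] by (simp add: eqC teq_refl)
  also have "\<dots> = h * lact (SB H (eB s)) (S c)" by (simp add: mult_lact CsM SB_in eB_in)
  finally show "h * sum_list (map (\<lambda>(v,w). v * S w) (DCr H s c)) = h * lact (SB H (eB s)) (S c)" .
qed

end


lemma tev3_Nil[simp]: "tev3 \<psi> [] = 0" by (simp add: tev3_def)
lemma tev3_append[simp]: "tev3 \<psi> (xs @ ys) = tev3 \<psi> xs + tev3 \<psi> ys" by (simp add: tev3_def)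

lemma tev3_Pair[simp]: "tev3 \<psi> (map (Pair r) M) = tev (\<psi> r) M"
  by (induct M) (auto simp: tev3_def)

lemma tev3_L: "tev3 \<psi> (concat (map (\<lambda>(p,q). map (\<lambda>(u,v). (u,v,q)) (F p)) L)) = tev (\<lambda>p q. tev (\<lambda>u v. \<psi> u v q) (F p)) L"
proof -
  have *: "tev3 \<psi> (map (\<lambda>(u,v). (u,v,q)) M) = tev (\<lambda>u v. \<psi> u v q) M" for q M
    by (induct M) (auto simp: tev3_def)
  show ?thesis by (induct L) (auto simp: *)
qed

lemma tev3_R: "tev3 \<psi> (concat (map (\<lambda>(r,s). map (\<lambda>(v,w). (r,v,w)) (G s)) L)) = tev (\<lambda>r s. tev (\<lambda>v w. \<psi> r v w) (G s)) L"
proof -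
  have *: "tev3 \<psi> (map (\<lambda>(v,w). (r,v,w)) M) = tev (\<lambda>v w. \<psi> r v w) M" for r M
    by (induct M) (auto simp: tev3_def)
  show ?thesis by (induct L) auto
qed

context rmha begin

lemma coass3_tev:
  assumes "trilin \<psi>" "R1 H \<psi>" "R2' H \<psi>"
  shows "tev (\<lambda>p q. tev (\<lambda>u v. \<psi> u v q) (DBl H p a)) (DCr H b c) = tev (\<lambda>r s. tev (\<lambda>v w. \<psi> r v w) (DCr H s c)) (DBl H b a)"
proof -
  have "tev3 \<psi> (concat (map (\<lambda>(p, q). map (\<lambda>(u, v). (u, v, q)) (DBl H p a)) (DCr H b c))) =
        tev3 \<psi> (concat (map (\<lambda>(r, s). map (\<lambda>(v, w). (r, v, w)) (DCr H s c)) (DBl H b a)))"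
    using coass3[of a b c] assms unfolding teq3_def by blast
  thus ?thesis unfolding tev3_L tev3_R[of \<psi> "\<lambda>s. DCr H s c"] .
qed

lemma S_neg: "S (- a) = - S a"
  using S_add[of a "-a"] S_zero by (simp add: eq_neg_iff_add_eq_0 add.commute)

lemma psi1_ok:
  assumes b: "bilin \<omega>" and p: "PB \<omega>"
  shows "trilin (\<lambda>u v w. \<omega> u (v * S w))" "R1 H (\<lambda>u v w. \<omega> u (v * S w))" "R2' H (\<lambda>u v w. \<omega> u (v * S w))"
proof -
  show "trilin (\<lambda>u v w. \<omega> u (v * S w))" unfolding trilin_def
    using b by (auto intro!: bilinI simp: bilinD distrib_left distrib_right S_add S_sc cscale_mult_left[symmetric] cscale_mult_right[symmetric])
  show "R1 H (\<lambda>u v w. \<omega> u (v * S w))" unfolding R1_def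
    using p by (simp add: PB_def lact_mult CsM SB_in)
  show "R2' H (\<lambda>u v w. \<omega> u (v * S w))" unfolding R2'_def
    by (simp add: mult_lact S_ractC BsM SC_in)
qed

lemma psi2_ok:
  assumes b: "bilin \<omega>" and p: "PC \<omega>"
  shows "trilin (\<lambda>u v w. \<omega> (S u * v) w)" "R1 H (\<lambda>u v w. \<omega> (S u * v) w)" "R2' H (\<lambda>u v w. \<omega> (S u * v) w)"
proof -
  show "trilin (\<lambda>u v w. \<omega> (S u * v) w)" unfolding trilin_def
    using b by (auto intro!: bilinI simp: bilinD distrib_left distrib_right S_add S_sc cscale_mult_left[symmetric] cscale_mult_right[symmetric])
  show "R1 H (\<lambda>u v w. \<omega> (S u * v) w)" unfolding R1_def
    by (simp add: S_lactB mult_lact CsM SB_in)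
  show "R2' H (\<lambda>u v w. \<omega> (S u * v) w)" unfolding R2'_def
    using p by (simp add: PC_def ract_mult[symmetric] BsM SC_in)
qed

lemma wB_add_first: "bilin \<phi> \<Longrightarrow> PB \<phi> \<Longrightarrow> wB (p + p') \<phi> u v = wB p \<phi> u v + wB p' \<phi> u v"
  unfolding wB_def using tevB[OF DBadd[rule_format, of p p' "[(u,v)]"]] by simp
lemma wB_sc_first: "bilin \<phi> \<Longrightarrow> PB \<phi> \<Longrightarrow> wB (cscale c p) \<phi> u v = c * wB p \<phi> u v"
  unfolding wB_def using tevB[OF DBsc[rule_format, of c p "[(u,v)]"]] by (simp add: tev_tscale)
lemma wC_add_first: "bilin \<phi> \<Longrightarrow> PC \<phi> \<Longrightarrow> wC (p + p') \<phi> u v = wC p \<phi> u v + wC p' \<phi> u v"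
  unfolding wC_def using tevC[OF DCadd[rule_format, of p p' "[(u,v)]"]] by simp
lemma wC_sc_first: "bilin \<phi> \<Longrightarrow> PC \<phi> \<Longrightarrow> wC (cscale c p) \<phi> u v = c * wC p \<phi> u v"
  unfolding wC_def using tevC[OF DCsc[rule_format, of c p "[(u,v)]"]] by (simp add: tev_tscale)

lemma S_surj: "\<exists>c. k = S c" using Sbij by (auto simp: bij_def surj_def)

lemma C1: "eq_BAB H (T_rho H (tmap2 S (DCl H b a))) (DBl H a b)"
proof (rule ndB2)
  fix k
  obtain c' where k: "k = S c'" using S_surj by blast
  show "eq_BAB H (ta2 (T_rho H (tmap2 S (DCl H b a))) k) (ta2 (DBl H a b) k)"
  proof (rule ndB1)
    fix e
    show "eq_BAB H (ta1 (ta2 (T_rho H (tmap2 S (DCl H b a))) k) e) (ta1 (ta2 (DBl H a b) k) e)"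
      unfolding eqB
    proof (rule teqI)
      fix \<phi> assume b: "bilin \<phi>" and p: "PB \<phi>"
      let ?\<omega> = "wB a \<phi>"
      have \<omega>b: "bilin ?\<omega>" and \<omega>p: "PB ?\<omega>" using wB_ok[OF b p] by auto
      have Y: "eq_BAB H (ta1 (ta2 (DBl H a b) k) e) (DB H a [(b * e, k)])"
      proof -
        have "eq_BAB H (ta1 (ta2 (DBl H a b) k) e) (ta1 (DB H a [(b, k)]) e)"
          by (rule ta1_resp, rule eqB_sym, rule DBl_char)
        also have "eq_BAB H \<dots> (ta1 (ta1 (DBr H a k) b) e)" by (rule ta1_resp, rule DBr_char)
        also have "\<dots> = ta1 (DBr H a k) (b * e)" by (rule ta1_ta1)
        also have "eq_BAB H \<dots> (DB H a [(b * e, k)])" by (rule eqB_sym, rule DBr_char)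
        finally show ?thesis .
      qed
      have Yv: "tev \<phi> (ta1 (ta2 (DBl H a b) k) e) = ?\<omega> (b * e) k"
        using tevB[OF Y b p] by (simp add: wB_def)
      have x1: "tev \<phi> (ta1 (ta2 (T_rho H (tmap2 S (DCl H b a))) k) e)
          = tev (\<lambda>p q. tev \<phi> (ta1 (ta2 (DBr H p (S q)) k) e)) (DCl H b a)"
        by (simp add: T_rho_def tev_concat_map tev_tmap2 tev_ta1 tev_ta2)
      have x2: "tev \<phi> (ta1 (ta2 (DBr H p z) k) e) = wB p \<phi> e (z * k)" for p z
      proof -
        have "eq_BAB H (ta1 (ta2 (DBr H p z) k) e) (ta1 (DBr H p (z * k)) e)" by (rule ta1_resp, rule ta2_DBr)
        also have "eq_BAB H \<dots> (DB H p [(e, z * k)])" by (rule eqB_sym, rule DBr_char)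
        finally show ?thesis using tevB b p by (simp add: wB_def)
      qed
      define \<chi> where "\<chi> p q = wB p \<phi> e (S q)" for p q
      have \<chi>b: "bilin \<chi>"
        unfolding \<chi>_def
        by (rule bilinI) (simp_all add: wB_add_first wB_sc_first b p S_add S_sc bilinD[OF wB_ok(1)[OF b p]])
      have \<chi>p: "PC \<chi>" unfolding PC_def \<chi>_def
      proof (intro ballI allI)
        fix y p q assume y: "y \<in> Cs H"
        have "wB (ract p (SC H y)) \<phi> e (S q) = wB p \<phi> e (lact (SC H y) (S q))"
          unfolding wB_def using tevB[OF DB_ract[OF SC_in[OF y]] b p] .
        thus "wB (ract p (SC H y)) \<phi> e (S q) = wB p \<phi> e (S (ract q y))" by (simp add: S_ractC y)
      qed
      have x3: "tev \<phi> (ta1 (ta2 (T_rho H (tmap2 S (DCl H b a))) k) e) = tev \<chi> (la2 c' (DCl H b a))"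
      proof -
        have "tev \<phi> (ta1 (ta2 (T_rho H (tmap2 S (DCl H b a))) k) e) = tev (\<lambda>p q. wB p \<phi> e (S q * k)) (DCl H b a)"
          unfolding x1 by (rule tev_cong) (rule x2)
        also have "\<dots> = tev \<chi> (la2 c' (DCl H b a))" unfolding tev_la2 \<chi>_def k by (simp add: S_mult)
        finally show ?thesis .
      qed
      have "eq_CAC H (la2 c' (DCl H b a)) (la1 a (DCr H b c'))"
      proof -
        have "eq_CAC H (la2 c' (DCl H b a)) (DC H b [(a, c')])" by (rule eqC_sym, rule DCl_char)
        also have "eq_CAC H \<dots> (la1 a (DCr H b c'))" by (rule DCr_char)
        finally show ?thesis .
      qed
      hence x4: "tev \<chi> (la2 c' (DCl H b a)) = tev \<chi> (la1 a (DCr H b c'))" using \<chi>b \<chi>p by (rule tevC)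
      have x5: "tev \<chi> (la1 a (DCr H b c')) = tev (\<lambda>p q. tev (\<lambda>u v. ?\<omega> u (v * S q)) (DBl H p e)) (DCr H b c')"
        unfolding tev_la1
      proof (rule tev_cong)
        fix p q
        have "\<chi> (a * p) q = tev ?\<omega> (DB H p [(e, S q)])" unfolding \<chi>_def wB_def[of "a * p"] by (rule DB_mul_tev[OF b p])
        also have "\<dots> = tev ?\<omega> (ta2 (DBl H p e) (S q))" by (rule tevB[OF DBl_char \<omega>b \<omega>p])
        also have "\<dots> = tev (\<lambda>u v. ?\<omega> u (v * S q)) (DBl H p e)" by (rule tev_ta2)
        finally show "\<chi> (a * p) q = tev (\<lambda>u v. ?\<omega> u (v * S q)) (DBl H p e)" .
      qed
      have x6: "\<dots> = tev (\<lambda>r s. tev (\<lambda>v w. ?\<omega> r (v * S w)) (DCr H s c')) (DBl H b e)"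
        by (rule coass3_tev[OF psi1_ok[OF \<omega>b \<omega>p]])
      have x7: "\<dots> = tev (\<lambda>r s. ?\<omega> (lact (eB s) r) (S c')) (DBl H b e)"
      proof (rule tev_cong)
        fix r s
        have "tev (\<lambda>v w. ?\<omega> r (v * S w)) (DCr H s c') = ?\<omega> r (sum_list (map (\<lambda>(v,w). v * S w) (DCr H s c')))"
          by (rule tev_sum_list2[OF \<omega>b])
        also have "\<dots> = ?\<omega> r (lact (SB H (eB s)) (S c'))" by (simp add: LemB)
        also have "\<dots> = ?\<omega> (lact (eB s) r) (S c')" by (rule PBD[OF \<omega>p eB_in, symmetric])
        finally show "tev (\<lambda>v w. ?\<omega> r (v * S w)) (DCr H s c') = ?\<omega> (lact (eB s) r) (S c')" .
      qed
      have x8: "\<dots> = ?\<omega> (b * e) (S c')"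
      proof -
        have "tev (\<lambda>r s. ?\<omega> (lact (eB s) r) (S c')) (DBl H b e) = ?\<omega> (sum_list (map (\<lambda>(r,s). lact (eB s) r) (DBl H b e))) (S c')"
          by (rule tev_sum_list1[OF \<omega>b])
        also have "sum_list (map (\<lambda>(r,s). lact (eB s) r) (DBl H b e)) = b * e"
          using LC2[of "DBl H b e" e b] by (simp add: eqB teq_refl)
        finally show ?thesis .
      qed
      show "tev \<phi> (ta1 (ta2 (T_rho H (tmap2 S (DCl H b a))) k) e) = tev \<phi> (ta1 (ta2 (DBl H a b) k) e)"
        using x3 x4 x5 x6 x7 x8 Yv k by simp
    qed
  qed
qed

lemma x2_gen: assumes b: "bilin \<phi>" and p: "PB \<phi>"
  shows "tev \<phi> (ta1 (ta2 (DBr H q z) k) e) = wB q \<phi> e (z * k)"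
proof -
  have "eq_BAB H (ta1 (ta2 (DBr H q z) k) e) (ta1 (DBr H q (z * k)) e)" by (rule ta1_resp, rule ta2_DBr)
  also have "eq_BAB H \<dots> (DB H q [(e, z * k)])" by (rule eqB_sym, rule DBr_char)
  finally show ?thesis using tevB b p by (simp add: wB_def)
qed

lemma chiB_ok: assumes b: "bilin \<phi>" and p: "PB \<phi>"
  shows "bilin (\<lambda>p q. wB p \<phi> e (S q))" "PC (\<lambda>p q. wB p \<phi> e (S q))"
proof -
  show "bilin (\<lambda>p q. wB p \<phi> e (S q))"
    by (rule bilinI) (simp_all add: wB_add_first wB_sc_first b p S_add S_sc bilinD[OF wB_ok(1)[OF b p]])
  show "PC (\<lambda>p q. wB p \<phi> e (S q))" unfolding PC_def
  proof (intro ballI allI)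
    fix y p q assume y: "y \<in> Cs H"
    have "wB (ract p (SC H y)) \<phi> e (S q) = wB p \<phi> e (lact (SC H y) (S q))"
      unfolding wB_def using tevB[OF DB_ract[OF SC_in[OF y]] b p] .
    thus "wB (ract p (SC H y)) \<phi> e (S q) = wB p \<phi> e (S (ract q y))" by (simp add: S_ractC y)
  qed
qed

lemma la1DCr_wC: assumes b: "bilin \<phi>" and p: "PC \<phi>"
  shows "tev \<phi> (la1 z (DCr H v c)) = wC v \<phi> z c"
  unfolding wC_def by (rule tevC[OF eqC_sym[OF DCr_char] b p])

lemma L1: "eq_CAC H (lambda_T H (tmap1 S (DBl H b a))) [(S a, b)]"
proof (rule ndC2)
  fix c
  show "eq_CAC H (la2 c (lambda_T H (tmap1 S (DBl H b a)))) (la2 c [(S a, b)])"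
    unfolding eqC
  proof (rule teqI)
    fix \<phi> assume b: "bilin \<phi>" and p: "PC \<phi>"
    have x1: "tev \<phi> (la2 c (lambda_T H (tmap1 S (DBl H b a)))) = tev (\<lambda>p q. tev \<phi> (la2 c (DCl H q (S p)))) (DBl H b a)"
      by (simp add: lambda_T_def tev_concat_map tev_tmap1 tev_la2)
    also have "\<dots> = tev (\<lambda>r s. tev (\<lambda>v w. \<phi> (S r * v) w) (DCr H s c)) (DBl H b a)"
    proof (rule tev_cong)
      fix r s
      have "eq_CAC H (la2 c (DCl H s (S r))) (la1 (S r) (DCr H s c))"
      proof -
        have "eq_CAC H (la2 c (DCl H s (S r))) (DC H s [(S r, c)])" by (rule eqC_sym, rule DCl_char)
        also have "eq_CAC H \<dots> (la1 (S r) (DCr H s c))" by (rule DCr_char)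
        finally show ?thesis .
      qed
      thus "tev \<phi> (la2 c (DCl H s (S r))) = tev (\<lambda>v w. \<phi> (S r * v) w) (DCr H s c)"
        using tevC b p by (simp add: tev_la1)
    qed
    also have "\<dots> = tev (\<lambda>p q. tev (\<lambda>u v. \<phi> (S u * v) q) (DBl H p a)) (DCr H b c)"
      by (rule coass3_tev[OF psi2_ok[OF b p], symmetric])
    also have "\<dots> = tev (\<lambda>p q. \<phi> (S a) (ract q (eC p))) (DCr H b c)"
    proof (rule tev_cong)
      fix p q
      have "tev (\<lambda>u v. \<phi> (S u * v) q) (DBl H p a) = \<phi> (sum_list (map (\<lambda>(u,v). S u * v) (DBl H p a))) q"
        by (rule tev_sum_list1[OF b])
      also have "\<dots> = \<phi> (ract (S a) (SC H (eC p))) q" by (simp add: LemA)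
      also have "\<dots> = \<phi> (S a) (ract q (eC p))" by (rule PCD[OF p eC_in])
      finally show "tev (\<lambda>u v. \<phi> (S u * v) q) (DBl H p a) = \<phi> (S a) (ract q (eC p))" .
    qed
    also have "\<dots> = \<phi> (S a) (sum_list (map (\<lambda>(p,q). ract q (eC p)) (DCr H b c)))"
      by (rule tev_sum_list2[OF b])
    also have "sum_list (map (\<lambda>(p,q). ract q (eC p)) (DCr H b c)) = c * b"
      using RC1[of "DCr H b c" b c] by (simp add: eqC teq_refl)
    finally show "tev \<phi> (la2 c (lambda_T H (tmap1 S (DBl H b a)))) = tev \<phi> (la2 c [(S a, b)])"
      by (simp add: la2_def)
  qed
qed

lemma L2: "eq_BAB H (T_rho H (tmap2 S (DCr H a b))) [(a, S b)]"
proof (rule ndB2)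
  fix k
  obtain d where k: "k = S d" using S_surj by blast
  show "eq_BAB H (ta2 (T_rho H (tmap2 S (DCr H a b))) k) (ta2 [(a, S b)] k)"
  proof (rule ndB1)
    fix e
    show "eq_BAB H (ta1 (ta2 (T_rho H (tmap2 S (DCr H a b))) k) e) (ta1 (ta2 [(a, S b)] k) e)"
      unfolding eqB
    proof (rule teqI)
      fix \<phi> assume b: "bilin \<phi>" and p: "PB \<phi>"
      define \<chi> where "\<chi> = (\<lambda>p q. wB p \<phi> e (S q))"
      have \<chi>b: "bilin \<chi>" and \<chi>p: "PC \<chi>" unfolding \<chi>_def using chiB_ok[OF b p] by auto
      have "tev \<phi> (ta1 (ta2 (T_rho H (tmap2 S (DCr H a b))) k) e)
          = tev (\<lambda>p q. tev \<phi> (ta1 (ta2 (DBr H p (S q)) k) e)) (DCr H a b)"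
        by (simp add: T_rho_def tev_concat_map tev_tmap2 tev_ta1 tev_ta2)
      also have "\<dots> = tev (\<lambda>p q. wB p \<phi> e (S q * k)) (DCr H a b)"
        by (rule tev_cong) (rule x2_gen[OF b p])
      also have "\<dots> = tev \<chi> (la2 d (DCr H a b))" unfolding tev_la2 \<chi>_def k by (simp add: S_mult)
      also have "\<dots> = tev \<chi> (DCr H a (d * b))" by (rule tevC[OF la2_DCr \<chi>b \<chi>p])
      also have "\<dots> = tev (\<lambda>p q. tev (\<lambda>u v. \<phi> u (v * S q)) (DBl H p e)) (DCr H a (d * b))"
      proof (rule tev_cong)
        fix p q
        have "\<chi> p q = tev \<phi> (ta2 (DBl H p e) (S q))" unfolding \<chi>_def wB_def by (rule tevB[OF DBl_char b p])
        thus "\<chi> p q = tev (\<lambda>u v. \<phi> u (v * S q)) (DBl H p e)" by (simp add: tev_ta2)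
      qed
      also have "\<dots> = tev (\<lambda>r s. tev (\<lambda>v w. \<phi> r (v * S w)) (DCr H s (d * b))) (DBl H a e)"
        by (rule coass3_tev[OF psi1_ok[OF b p]])
      also have "\<dots> = tev (\<lambda>r s. \<phi> (lact (eB s) r) (S (d * b))) (DBl H a e)"
      proof (rule tev_cong)
        fix r s
        have "tev (\<lambda>v w. \<phi> r (v * S w)) (DCr H s (d * b)) = \<phi> r (sum_list (map (\<lambda>(v,w). v * S w) (DCr H s (d * b))))"
          by (rule tev_sum_list2[OF b])
        also have "\<dots> = \<phi> r (lact (SB H (eB s)) (S (d * b)))" by (simp add: LemB)
        also have "\<dots> = \<phi> (lact (eB s) r) (S (d * b))" by (rule PBD[OF p eB_in, symmetric])
        finally show "tev (\<lambda>v w. \<phi> r (v * S w)) (DCr H s (d * b)) = \<phi> (lact (eB s) r) (S (d * b))" .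
      qed
      also have "\<dots> = \<phi> (sum_list (map (\<lambda>(r,s). lact (eB s) r) (DBl H a e))) (S (d * b))"
        by (rule tev_sum_list1[OF b])
      also have "sum_list (map (\<lambda>(r,s). lact (eB s) r) (DBl H a e)) = a * e"
        using LC2[of "DBl H a e" e a] by (simp add: eqB teq_refl)
      finally show "tev \<phi> (ta1 (ta2 (T_rho H (tmap2 S (DCr H a b))) k) e) = tev \<phi> (ta1 (ta2 [(a, S b)] k) e)"
        by (simp add: ta1_def ta2_def k S_mult)
    qed
  qed
qed

lemma C2: "eq_CAC H (lambda_T H (tmap1 S (DBr H a b))) (DCr H b a)"
proof (rule ndC1)
  fix k
  obtain e where k: "k = S e" using S_surj by blast
  show "eq_CAC H (la1 k (lambda_T H (tmap1 S (DBr H a b)))) (la1 k (DCr H b a))"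
  proof (rule ndC2)
    fix c
    show "eq_CAC H (la2 c (la1 k (lambda_T H (tmap1 S (DBr H a b))))) (la2 c (la1 k (DCr H b a)))"
      unfolding eqC
    proof (rule teqI)
      fix \<phi> assume b: "bilin \<phi>" and p: "PC \<phi>"
      let ?\<omega> = "wC b \<phi>"
      have \<omega>b: "bilin ?\<omega>" and \<omega>p: "PC ?\<omega>" using wC_ok[OF b p] by auto
      define \<chi> where "\<chi> = (\<lambda>u v. wC v \<phi> (S u) c)"
      have \<chi>b: "bilin \<chi>" unfolding \<chi>_def
        by (rule bilinI) (simp_all add: wC_add_first wC_sc_first b p S_add S_sc bilinD[OF wC_ok(1)[OF b p]])
      have \<chi>p: "PB \<chi>" unfolding PB_def \<chi>_def
      proof (intro ballI allI)
        fix x u v assume x: "x \<in> Bs H"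
        have "wC (lact (SB H x) v) \<phi> (S u) c = tev \<phi> (la1 (S u) (DCr H (lact (SB H x) v) c))"
          by (rule la1DCr_wC[OF b p, symmetric])
        also have "\<dots> = tev \<phi> (la1 (ract (S u) (SB H x)) (DCr H v c))"
          by (rule tevC[OF la1_DCr_lact[OF SB_in[OF x]] b p])
        also have "\<dots> = wC v \<phi> (S (lact x u)) c" by (simp add: la1DCr_wC[OF b p] S_lactB x)
        finally show "wC v \<phi> (S (lact x u)) c = wC (lact (SB H x) v) \<phi> (S u) c" by simp
      qed
      have "tev \<phi> (la2 c (la1 k (lambda_T H (tmap1 S (DBr H a b)))))
          = tev (\<lambda>u v. tev \<phi> (la2 c (la1 k (DCl H v (S u))))) (DBr H a b)"
        by (simp add: lambda_T_def tev_concat_map tev_tmap1 tev_la2 tev_la1)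
      also have "\<dots> = tev (\<lambda>u v. \<chi> (u * e) v) (DBr H a b)"
      proof (rule tev_cong)
        fix u v
        have "la2 c (la1 k (DCl H v (S u))) = la1 k (la2 c (DCl H v (S u)))" by (simp add: la1_la2)
        also have "eq_CAC H \<dots> (la1 k (DC H v [(S u, c)]))" by (rule la1_resp, rule eqC_sym, rule DCl_char)
        also have "eq_CAC H \<dots> (la1 k (la1 (S u) (DCr H v c)))" by (rule la1_resp, rule DCr_char)
        also have "\<dots> = la1 (S (u * e)) (DCr H v c)" by (simp add: la1_la1 k S_mult)
        finally have "tev \<phi> (la2 c (la1 k (DCl H v (S u)))) = tev \<phi> (la1 (S (u * e)) (DCr H v c))"
          using tevC b p by blast
        thus "tev \<phi> (la2 c (la1 k (DCl H v (S u)))) = \<chi> (u * e) v" by (simp add: \<chi>_def la1DCr_wC[OF b p])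
      qed
      also have "\<dots> = tev \<chi> (ta1 (DBr H a b) e)" by (simp add: tev_ta1)
      also have "\<dots> = tev \<chi> (ta2 (DBl H a e) b)"
      proof (rule tevB[OF _ \<chi>b \<chi>p])
        have "eq_BAB H (ta1 (DBr H a b) e) (DB H a [(e, b)])" by (rule eqB_sym, rule DBr_char)
        also have "eq_BAB H \<dots> (ta2 (DBl H a e) b)" by (rule DBl_char)
        finally show "eq_BAB H (ta1 (DBr H a b) e) (ta2 (DBl H a e) b)" .
      qed
      also have "\<dots> = tev (\<lambda>r s. tev (\<lambda>v w. ?\<omega> (S r * v) w) (DCr H s c)) (DBl H a e)"
        unfolding tev_ta2
      proof (rule tev_cong)
        fix u v
        have "\<chi> u (v * b) = tev \<phi> (DC H (v * b) [(S u, c)])" by (simp add: \<chi>_def wC_def)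
        also have "\<dots> = tev ?\<omega> (DC H v [(S u, c)])" by (rule DC_mul_tev[OF b p])
        also have "\<dots> = tev ?\<omega> (la1 (S u) (DCr H v c))" by (rule tevC[OF DCr_char \<omega>b \<omega>p])
        finally show "\<chi> u (v * b) = tev (\<lambda>v' w. ?\<omega> (S u * v') w) (DCr H v c)" by (simp add: tev_la1)
      qed
      also have "\<dots> = tev (\<lambda>p q. tev (\<lambda>u v. ?\<omega> (S u * v) q) (DBl H p e)) (DCr H a c)"
        by (rule coass3_tev[OF psi2_ok[OF \<omega>b \<omega>p], symmetric])
      also have "\<dots> = tev (\<lambda>p q. ?\<omega> (S e) (ract q (eC p))) (DCr H a c)"
      proof (rule tev_cong)
        fix p q
        have "tev (\<lambda>u v. ?\<omega> (S u * v) q) (DBl H p e) = ?\<omega> (sum_list (map (\<lambda>(u,v). S u * v) (DBl H p e))) q"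
          by (rule tev_sum_list1[OF \<omega>b])
        also have "\<dots> = ?\<omega> (ract (S e) (SC H (eC p))) q" by (simp add: LemA)
        also have "\<dots> = ?\<omega> (S e) (ract q (eC p))" by (rule PCD[OF \<omega>p eC_in])
        finally show "tev (\<lambda>u v. ?\<omega> (S u * v) q) (DBl H p e) = ?\<omega> (S e) (ract q (eC p))" .
      qed
      also have "\<dots> = ?\<omega> (S e) (sum_list (map (\<lambda>(p,q). ract q (eC p)) (DCr H a c)))"
        by (rule tev_sum_list2[OF \<omega>b])
      also have "sum_list (map (\<lambda>(p,q). ract q (eC p)) (DCr H a c)) = c * a"
        using RC1[of "DCr H a c" a c] by (simp add: eqC teq_refl)
      also have "?\<omega> (S e) (c * a) = tev \<phi> (la2 c (la1 k (DCr H b a)))"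
      proof -
        have "la2 c (la1 k (DCr H b a)) = la1 k (la2 c (DCr H b a))" by (simp add: la1_la2)
        also have "eq_CAC H \<dots> (la1 k (DCr H b (c * a)))" by (rule la1_resp, rule la2_DCr)
        finally have "tev \<phi> (la2 c (la1 k (DCr H b a))) = tev \<phi> (la1 k (DCr H b (c * a)))" using tevC b p by blast
        thus ?thesis by (simp add: la1DCr_wC[OF b p] k)
      qed
      finally show "tev \<phi> (la2 c (la1 k (lambda_T H (tmap1 S (DBr H a b))))) = tev \<phi> (la2 c (la1 k (DCr H b a)))" .
    qed
  qed
qed

end


lemma teq_concat: "(\<And>x. x \<in> set xs \<Longrightarrow> teq P (F x) (G x)) \<Longrightarrow> teq P (concat (map F xs)) (concat (map G xs))"
  by (induct xs) (auto intro: teq_append)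

lemma qinv_spec: "qbij E1 E2 f \<Longrightarrow> E2 (f (qinv E2 f ys)) ys"
proof -
  assume "qbij E1 E2 f"
  hence "\<exists>xs. E2 (f xs) ys" unfolding qbij_def by blast
  thus ?thesis unfolding qinv_def by (rule someI_ex)
qed

lemma tflip_tmap2: "tflip (tmap2 f X) = tmap1 f (tflip X)" by (induct X) (auto simp: tflip_def tmap1_def tmap2_def)
lemma tflip_tmap1: "tflip (tmap1 f X) = tmap2 f (tflip X)" by (induct X) (auto simp: tflip_def tmap1_def tmap2_def)

context rmha begin

lemma bilin_flip: "bilin \<phi> \<Longrightarrow> bilin (\<lambda>a b. \<phi> b a)" by (simp add: bilin_def)
lemma bilin_S1: "bilin \<phi> \<Longrightarrow> bilin (\<lambda>a b. \<phi> (S a) b)"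
  by (rule bilinI) (simp_all add: bilinD S_add S_sc)
lemma bilin_S2: "bilin \<phi> \<Longrightarrow> bilin (\<lambda>a b. \<phi> a (S b))"
  by (rule bilinI) (simp_all add: bilinD S_add S_sc)

lemma flip_ABBA: "eq_ABBA H X Y \<Longrightarrow> eq_BAAB H (tflip X) (tflip Y)"
  unfolding eqABBA eqBAAB tflip_def
proof (rule teq_map)
  fix \<phi> :: "'a \<Rightarrow> 'a \<Rightarrow> complex" assume b: "bilin \<phi>" and p: "PBAAB \<phi>"
  have "PABBA (\<lambda>a b. \<phi> b a)" unfolding PABBA_def
  proof (intro ballI allI)
    fix x a b assume x: "x \<in> Bs H"
    show "\<phi> b (ract a x) = \<phi> (lact x b) a" using p x unfolding PBAAB_def by simp
  qed
  thus "bilin (\<lambda>a b. \<phi> b a) \<and> PABBA (\<lambda>a b. \<phi> b a)" using bilin_flip[OF b] by simp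
qed

lemma flip_ACCA: "eq_ACCA H X Y \<Longrightarrow> eq_CAAC H (tflip X) (tflip Y)"
  unfolding eqACCA eqCAAC tflip_def
proof (rule teq_map)
  fix \<phi> :: "'a \<Rightarrow> 'a \<Rightarrow> complex" assume b: "bilin \<phi>" and p: "PCAAC \<phi>"
  have "PACCA (\<lambda>a b. \<phi> b a)" unfolding PACCA_def
  proof (intro ballI allI)
    fix y a b assume y: "y \<in> Cs H"
    show "\<phi> b (ract a y) = \<phi> (lact y b) a" using p y unfolding PCAAC_def by simp
  qed
  thus "bilin (\<lambda>a b. \<phi> b a) \<and> PACCA (\<lambda>a b. \<phi> b a)" using bilin_flip[OF b] by simp
qed

lemma S1_BAB: "eq_BAB H X Y \<Longrightarrow> eq_ACCA H (tmap1 S X) (tmap1 S Y)"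
  unfolding eqB eqACCA tmap1_def
proof (rule teq_map)
  fix \<phi> :: "'a \<Rightarrow> 'a \<Rightarrow> complex" assume b: "bilin \<phi>" and p: "PACCA \<phi>"
  have "PB (\<lambda>a b. \<phi> (S a) b)" unfolding PB_def
  proof (intro ballI allI)
    fix x a b assume x: "x \<in> Bs H"
    have "\<phi> (S (lact x a)) b = \<phi> (ract (S a) (SB H x)) b" by (simp add: S_lactB x)
    also have "\<dots> = \<phi> (S a) (lact (SB H x) b)" using p SB_in[OF x] unfolding PACCA_def by blast
    finally show "\<phi> (S (lact x a)) b = \<phi> (S a) (lact (SB H x) b)" .
  qed
  thus "bilin (\<lambda>a b. \<phi> (S a) b) \<and> PB (\<lambda>a b. \<phi> (S a) b)" using bilin_S1[OF b] by simp
qed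

lemma S2_CAC: "eq_CAC H X Y \<Longrightarrow> eq_ABBA H (tmap2 S X) (tmap2 S Y)"
  unfolding eqC eqABBA tmap2_def
proof (rule teq_map)
  fix \<phi> :: "'a \<Rightarrow> 'a \<Rightarrow> complex" assume b: "bilin \<phi>" and p: "PABBA \<phi>"
  have "PC (\<lambda>a b. \<phi> a (S b))" unfolding PC_def
  proof (intro ballI allI)
    fix y a b assume y: "y \<in> Cs H"
    have "\<phi> (ract a (SC H y)) (S b) = \<phi> a (lact (SC H y) (S b))" using p SC_in[OF y] unfolding PABBA_def by blast
    also have "\<dots> = \<phi> a (S (ract b y))" by (simp add: S_ractC y)
    finally show "\<phi> (ract a (SC H y)) (S b) = \<phi> a (S (ract b y))" .
  qed
  thus "bilin (\<lambda>a b. \<phi> a (S b)) \<and> PC (\<lambda>a b. \<phi> a (S b))" using bilin_S2[OF b] by simp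
qed

lemma comp_i1: "T_rho H (tmap2 S (lambda_T H xs)) = concat (map (\<lambda>(a,b). T_rho H (tmap2 S (DCl H b a))) xs)"
  by (induct xs) (auto simp: T_rho_def tmap2_def lambda_T_def)
lemma comp_Tl_flip: "T_lambda H (tflip xs) = concat (map (\<lambda>(a,b). DBl H a b) xs)"
  by (induct xs) (auto simp: T_lambda_def tflip_def)
lemma comp_ii1: "lambda_T H (tmap1 S (T_rho H xs)) = concat (map (\<lambda>(a,b). lambda_T H (tmap1 S (DBr H a b))) xs)"
  by (induct xs) (auto simp: lambda_T_def tmap1_def T_rho_def)
lemma comp_rT_flip: "rho_T H (tflip xs) = concat (map (\<lambda>(a,b). DCr H b a) xs)"
  by (induct xs) (auto simp: rho_T_def tflip_def)
lemma comp_L1: "lambda_T H (tmap1 S (T_lambda H (tflip xs))) = concat (map (\<lambda>(a,b). lambda_T H (tmap1 S (DBl H a b))) xs)"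
  by (induct xs) (auto simp: lambda_T_def tmap1_def T_lambda_def tflip_def)
lemma comp_S1flip: "tmap1 S (tflip xs) = concat (map (\<lambda>(a,b). [(S b, a)]) xs)"
  by (induct xs) (auto simp: tmap1_def tflip_def)
lemma comp_L2: "T_rho H (tmap2 S (rho_T H (tflip xs))) = concat (map (\<lambda>(a,b). T_rho H (tmap2 S (DCr H b a))) xs)"
  by (induct xs) (auto simp: rho_T_def tmap2_def T_rho_def tflip_def)
lemma comp_S2flip: "tmap2 S (tflip xs) = concat (map (\<lambda>(a,b). [(b, S a)]) xs)"
  by (induct xs) (auto simp: tmap2_def tflip_def)

lemma core1: "eq_BAB H (T_rho H (tmap2 S (lambda_T H xs))) (T_lambda H (tflip xs))"
  unfolding comp_i1 comp_Tl_flip eqB by (rule teq_concat) (auto simp: C1[unfolded eqB])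
lemma core2: "eq_CAC H (lambda_T H (tmap1 S (T_rho H xs))) (rho_T H (tflip xs))"
  unfolding comp_ii1 comp_rT_flip eqC by (rule teq_concat) (auto simp: C2[unfolded eqC])
lemma core3: "eq_CAC H (lambda_T H (tmap1 S (T_lambda H (tflip xs)))) (tmap1 S (tflip xs))"
  unfolding comp_L1 comp_S1flip eqC by (rule teq_concat) (auto simp: L1[unfolded eqC])
lemma core4: "eq_BAB H (T_rho H (tmap2 S (rho_T H (tflip xs)))) (tmap2 S (tflip xs))"
  unfolding comp_L2 comp_S2flip eqB by (rule teq_concat) (auto simp: L2[unfolded eqB])

lemma qTr_inj: "eq_BAB H (T_rho H X) (T_rho H Y) \<Longrightarrow> eq_ABBA H X Y" using qTr unfolding qbij_def by blast
lemma qTr_resp: "eq_ABBA H X Y \<Longrightarrow> eq_BAB H (T_rho H X) (T_rho H Y)" using qTr unfolding qbij_def by blast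
lemma qTl_inj: "eq_BAB H (T_lambda H X) (T_lambda H Y) \<Longrightarrow> eq_CAAC H X Y" using qTl unfolding qbij_def by blast
lemma qlT_inj: "eq_CAC H (lambda_T H X) (lambda_T H Y) \<Longrightarrow> eq_ACCA H X Y" using qlT unfolding qbij_def by blast
lemma qlT_resp: "eq_ACCA H X Y \<Longrightarrow> eq_CAC H (lambda_T H X) (lambda_T H Y)" using qlT unfolding qbij_def by blast
lemma qrT_inj: "eq_CAC H (rho_T H X) (rho_T H Y) \<Longrightarrow> eq_BAAB H X Y" using qrT unfolding qbij_def by blast

lemma part_i1: "eq_BAAB H (tmap1 S (tflip (lambda_T H xs)))
                         (tflip (qinv (eq_BAB H) (T_rho H) (T_lambda H (tflip xs))))"
proof -
  let ?Z = "qinv (eq_BAB H) (T_rho H) (T_lambda H (tflip xs))"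
  have "eq_BAB H (T_rho H (tmap2 S (lambda_T H xs))) (T_rho H ?Z)"
    using core1 eqB_sym[OF qinv_spec[OF qTr]] by (rule eqB_trans)
  hence "eq_ABBA H (tmap2 S (lambda_T H xs)) ?Z" by (rule qTr_inj)
  from flip_ABBA[OF this] show ?thesis by (simp add: tflip_tmap2)
qed

lemma part_ii1: "eq_CAAC H (tmap2 S (tflip (T_rho H xs)))
                         (tflip (qinv (eq_CAC H) (lambda_T H) (rho_T H (tflip xs))))"
proof -
  let ?V = "qinv (eq_CAC H) (lambda_T H) (rho_T H (tflip xs))"
  have "eq_CAC H (lambda_T H (tmap1 S (T_rho H xs))) (lambda_T H ?V)"
    using core2 eqC_sym[OF qinv_spec[OF qlT]] by (rule eqC_trans)
  hence "eq_ACCA H (tmap1 S (T_rho H xs)) ?V" by (rule qlT_inj)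
  from flip_ACCA[OF this] show ?thesis by (simp add: tflip_tmap1)
qed

lemma part_i2: "eq_BAAB H (tflip (qinv (eq_BAB H) (T_rho H) (T_lambda H (tflip xs))))
                         (qinv (eq_CAC H) (rho_T H) (tmap1 S (tflip xs)))"
proof -
  let ?Z = "qinv (eq_BAB H) (T_rho H) (T_lambda H (tflip xs))"
  let ?W = "qinv (eq_CAC H) (rho_T H) (tmap1 S (tflip xs))"
  have "eq_CAC H (rho_T H (tflip ?Z)) (lambda_T H (tmap1 S (T_rho H ?Z)))" by (rule eqC_sym, rule core2)
  also have "eq_CAC H \<dots> (lambda_T H (tmap1 S (T_lambda H (tflip xs))))"
  proof -
    have "eq_ACCA H (tmap1 S (T_rho H ?Z)) (tmap1 S (T_lambda H (tflip xs)))"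
      by (rule S1_BAB, rule qinv_spec[OF qTr])
    thus ?thesis by (rule qlT_resp)
  qed
  also have "eq_CAC H \<dots> (tmap1 S (tflip xs))" by (rule core3)
  also have "eq_CAC H \<dots> (rho_T H ?W)" by (rule eqC_sym, rule qinv_spec[OF qrT])
  finally show ?thesis by (rule qrT_inj)
qed

lemma part_ii2: "eq_CAAC H (tflip (qinv (eq_CAC H) (lambda_T H) (rho_T H (tflip xs))))
                         (qinv (eq_BAB H) (T_lambda H) (tmap2 S (tflip xs)))"
proof -
  let ?V = "qinv (eq_CAC H) (lambda_T H) (rho_T H (tflip xs))"
  let ?U = "qinv (eq_BAB H) (T_lambda H) (tmap2 S (tflip xs))"
  have "eq_BAB H (T_lambda H (tflip ?V)) (T_rho H (tmap2 S (lambda_T H ?V)))" by (rule eqB_sym, rule core1)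
  also have "eq_BAB H \<dots> (T_rho H (tmap2 S (rho_T H (tflip xs))))"
  proof -
    have "eq_ABBA H (tmap2 S (lambda_T H ?V)) (tmap2 S (rho_T H (tflip xs)))"
      by (rule S2_CAC, rule qinv_spec[OF qlT])
    thus ?thesis by (rule qTr_resp)
  qed
  also have "eq_BAB H \<dots> (tmap2 S (tflip xs))" by (rule core4)
  also have "eq_BAB H \<dots> (T_lambda H ?U)" by (rule eqB_sym, rule qinv_spec[OF qTl])
  finally show ?thesis by (rule qTl_inj)
qed

end

theorem proposition5p8:
  fixes H :: "'a::calg mhdata" and S :: "'a \<Rightarrow> 'a"
  assumes "regular_mult_hopf_algebroid H"
    and "is_antipode H S"
  shows "(\<forall>xs. eq_BAAB H (tmap1 S (tflip (lambda_T H xs)))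
                         (tflip (qinv (eq_BAB H) (T_rho H) (T_lambda H (tflip xs)))) \<and>
               eq_BAAB H (tflip (qinv (eq_BAB H) (T_rho H) (T_lambda H (tflip xs))))
                         (qinv (eq_CAC H) (rho_T H) (tmap1 S (tflip xs))))
       \<and> (\<forall>xs. eq_CAAC H (tmap2 S (tflip (T_rho H xs)))
                         (tflip (qinv (eq_CAC H) (lambda_T H) (rho_T H (tflip xs)))) \<and>
               eq_CAAC H (tflip (qinv (eq_CAC H) (lambda_T H) (rho_T H (tflip xs))))
                         (qinv (eq_BAB H) (T_lambda H) (tmap2 S (tflip xs))))"
proof -
  obtain eB eC where e: "left_counit H eB" "right_counit H eC"
    "\<forall>a b xs. eq_BAB H xs (T_rho H [(a, b)]) \<longrightarrow>
           sum_list (map (\<lambda>(c, d). S c * d) xs) = lact (SC H (eC a)) b"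
    "\<forall>a b xs. eq_CAC H xs (lambda_T H [(a, b)]) \<longrightarrow>
           sum_list (map (\<lambda>(c, d). c * S d) xs) = ract a (SB H (eB b))"
    using assms(2) unfolding is_antipode_def by blast
  have nd: "nondegenerate_alg TYPE('a)"
    using assms(1) unfolding regular_mult_hopf_algebroid_def mult_bialgebroid_def by blast
  have ax1: "bij S" using assms(2) unfolding is_antipode_def by (elim conjE) assumption
  have ax2: "clinear S" using assms(2) unfolding is_antipode_def by (elim conjE) assumption
  have ax3: "\<forall>a b. S (a * b) = S b * S a" using assms(2) unfolding is_antipode_def by (elim conjE) assumption
  have ax4: "\<forall>x\<in>Bs H. \<forall>y\<in>Cs H. \<forall>x'\<in>Bs H. \<forall>y'\<in>Cs H. \<forall>a.
        S (xyaxy x y a x' y') = lact (SC H y') (lact (SB H x') (ract (ract (S a) (SC H y)) (SB H x)))"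
    using assms(2) unfolding is_antipode_def by (elim conjE) assumption
  interpret R: rmha H S eB eC
    by (rule rmha.intro[OF nondeg.intro[OF nd] rmha_axioms.intro[OF assms(1) ax1 ax2 ax3 ax4 e]])
  show ?thesis using R.part_i1 R.part_i2 R.part_ii1 R.part_ii2 by simp
qed


end
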